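(* Let $p$ be prime, $\mathcal{A}=\mathbb{Z}/p$, $D\ge1$, let $\mathfrak{F}$ be a nontrivial LCA on $\mathcal{A}^{\mathbb{Z}^D}$, and let $\mu$ be a harmonically mixing probability measure on $\mathcal{A}^{\mathbb{Z}^D}$. Then there is $J\subset\mathbb{N}$ of Cesàro density 1 such that $\mathfrak{F}^j\mu\to\eta$ weak* as $j\to\infty$, $j\in J$; in particular $\frac1N\sum_{n=1}^N\mathfrak{F}^n\mu\to\eta$ weak*.
   Context: $\eta$ is the Haar measure on $\mathcal{A}^{\mathbb{Z}^D}$; $\mathfrak{F}^j\mu=\mu\circ\mathfrak{F}^{-j}$. An LCA on $\mathcal{A}^{\mathbb{Z}^D}$ is $\mathfrak{F}=\sum_{\vec u\in U}f_{\vec u}\sigma^{\vec u}$ ($U$ finite, $(\sigma^{\vec m}\mathbf{a})_{\vec n}=a_{\vec m+\vec n}$), nontrivial if at least two coefficients are nonzero. Characters are $\chi=\bigotimes_{\vec n}\chi_{\vec n}$, all but finitely many $\chi_{\vec n}$ trivial; rank = number of nontrivial $\chi_{\vec n}$. $\mu$ is harmonically mixing if for every $\varepsilon>0$ there is $R$ with rank$(\chi)>R\Rightarrow|\int\chi\,d\mu|<\varepsilon$. Cesàro density 1 means $|J\cap[1,N]|/N\to1$. *)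

theory Defs
  imports "HOL-Probability.Probability"
begin

text \<open>Configurations on the lattice Z^D (D = CARD('d) \<ge> 1) with values in Z/p,
  where Z/p is represented by the residues {0..<p}. The configuration space
  carries the product sigma-algebra and the product topology (the function
  type carries the product topology; nat has the discrete topology).\<close>

definition cfg_space :: "nat \<Rightarrow> ((int ^ 'd) \<Rightarrow> nat) measure" where
  "cfg_space p = PiM UNIV (\<lambda>_. count_space {0..<p})"

definition haar :: "nat \<Rightarrow> ((int ^ 'd) \<Rightarrow> nat) measure" where
  "haar p = PiM UNIV (\<lambda>_. uniform_count_measure {0..<p})"

definition lca :: "nat \<Rightarrow> ((int ^ 'd) \<Rightarrow> nat) \<Rightarrow> ((int ^ 'd) \<Rightarrow> nat) \<Rightarrow> ((int ^ 'd) \<Rightarrow> nat)" where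
  "lca p f a = (\<lambda>n. (\<Sum>u\<in>{u. f u \<noteq> 0}. f u * a (u + n)) mod p)"

definition lca_coeffs :: "nat \<Rightarrow> ((int ^ 'd) \<Rightarrow> nat) \<Rightarrow> bool" where
  "lca_coeffs p f \<longleftrightarrow> finite {u. f u \<noteq> 0} \<and> (\<forall>u. f u < p)"

definition nontrivial_lca :: "((int ^ 'd) \<Rightarrow> nat) \<Rightarrow> bool" where
  "nontrivial_lca f \<longleftrightarrow> card {u. f u \<noteq> 0} \<ge> 2"

text \<open>Characters: k n \<in> Z/p indexes the character chi_n(x) = exp(2 pi i k_n x / p);
  all but finitely many trivial. chi = tensor product of the chi_n.\<close>
definition char_index :: "nat \<Rightarrow> ((int ^ 'd) \<Rightarrow> nat) \<Rightarrow> bool" where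
  "char_index p k \<longleftrightarrow> finite {n. k n \<noteq> 0} \<and> (\<forall>n. k n < p)"

definition character :: "nat \<Rightarrow> ((int ^ 'd) \<Rightarrow> nat) \<Rightarrow> ((int ^ 'd) \<Rightarrow> nat) \<Rightarrow> complex" where
  "character p k a = (\<Prod>n\<in>{n. k n \<noteq> 0}. cis (2 * pi * real (k n * a n) / real p))"

definition char_rank :: "((int ^ 'd) \<Rightarrow> nat) \<Rightarrow> nat" where
  "char_rank k = card {n. k n \<noteq> 0}"

definition harmonically_mixing :: "nat \<Rightarrow> ((int ^ 'd) \<Rightarrow> nat) measure \<Rightarrow> bool" where
  "harmonically_mixing p \<mu> \<longleftrightarrow>
     (\<forall>\<epsilon>>0. \<exists>R. \<forall>k. char_index p k \<and> char_rank k > R \<longrightarrow>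
        cmod (integral\<^sup>L \<mu> (character p k)) < \<epsilon>)"

definition weak_star_along :: "nat \<Rightarrow> (nat \<Rightarrow> ((int ^ 'd) \<Rightarrow> nat) measure) \<Rightarrow> nat set
     \<Rightarrow> ((int ^ 'd) \<Rightarrow> nat) measure \<Rightarrow> bool" where
  "weak_star_along p \<nu> J \<nu>0 \<longleftrightarrow>
     (\<forall>g :: ((int ^ 'd) \<Rightarrow> nat) \<Rightarrow> real. continuous_on (space (cfg_space p)) g \<longrightarrow>
        ((\<lambda>j. integral\<^sup>L (\<nu> j) g) \<longlongrightarrow> integral\<^sup>L \<nu>0 g) (sequentially \<sqinter> principal J))"

definition cesaro_density_one :: "nat set \<Rightarrow> bool" where
  "cesaro_density_one J \<longleftrightarrow>
     ((\<lambda>N. real (card (J \<inter> {1..N})) / real N) \<longlonglongrightarrow> 1)"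

end

theory Submission
  imports Defs "HOL-Library.Poly_Mapping" "HOL-Computational_Algebra.Primes"
begin


section \<open>Congruence modulo p in a commutative ring\<close>

definition pcong :: "nat \<Rightarrow> 'a::comm_ring_1 \<Rightarrow> 'a \<Rightarrow> bool" where
  "pcong p A B \<longleftrightarrow> (\<exists>E. A - B = of_nat p * E)"

lemma pcong_refl[simp]: "pcong p A A"
  unfolding pcong_def by (rule exI[of _ 0]) simp

lemma pcong_sym: "pcong p A B \<Longrightarrow> pcong p B A"
  unfolding pcong_def by (metis minus_diff_eq mult_minus_right)

lemma pcong_trans: "pcong p A B \<Longrightarrow> pcong p B C \<Longrightarrow> pcong p A C"
  unfolding pcong_def by (metis (no_types, lifting) diff_add_cancel add_diff_eq distrib_left diff_diff_eq2)

lemma pcong_add: "pcong p A B \<Longrightarrow> pcong p C D \<Longrightarrow> pcong p (A + C) (B + D)"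
  unfolding pcong_def by (metis (no_types, lifting) add_diff_add distrib_left)

lemma pcong_diff: "pcong p A B \<Longrightarrow> pcong p C D \<Longrightarrow> pcong p (A - C) (B - D)"
  unfolding pcong_def by (metis (no_types, lifting) diff_diff_eq2 diff_add_eq right_diff_distrib add_diff_eq diff_diff_add)

lemma pcong_mult_right: "pcong p A B \<Longrightarrow> pcong p (A * C) (B * C)"
  unfolding pcong_def by (metis left_diff_distrib mult.assoc)

lemma pcong_mult: "pcong p A B \<Longrightarrow> pcong p C D \<Longrightarrow> pcong p (A * C) (B * D)"
  by (metis pcong_mult_right pcong_trans mult.commute)

lemma pcong_power: "pcong p A B \<Longrightarrow> pcong p (A ^ n) (B ^ n)"
  by (induction n) (auto intro: pcong_mult)

lemma pcong_multiple: "pcong p (of_nat p * E) 0"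
  unfolding pcong_def by auto

lemma freshman:
  fixes a b :: "'a::comm_ring_1"
  assumes "prime p"
  shows "pcong p ((a + b) ^ p) (a ^ p + b ^ p)"
proof -
  have p0: "p > 0" using assms prime_gt_0_nat by blast
  have "(a + b) ^ p = (\<Sum>k\<le>p. of_nat (p choose k) * a ^ k * b ^ (p - k))"
    by (rule binomial_ring)
  also have "\<dots> = (\<Sum>k\<in>{0,p}. of_nat (p choose k) * a ^ k * b ^ (p - k))
      + (\<Sum>k\<in>{..p} - {0,p}. of_nat (p choose k) * a ^ k * b ^ (p - k))"
    by (subst sum.subset_diff[of "{0,p}"]) (auto simp: add.commute)
  also have "(\<Sum>k\<in>{0,p}. of_nat (p choose k) * a ^ k * b ^ (p - k)) = a ^ p + b ^ p"
    using p0 by (simp add: add.commute)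
  finally have eq: "(a + b) ^ p = a ^ p + b ^ p + (\<Sum>k\<in>{..p} - {0,p}. of_nat (p choose k) * a ^ k * b ^ (p - k))" .
  have "\<forall>k\<in>{..p} - {0,p}. \<exists>c. of_nat (p choose k) * a ^ k * b ^ (p - k) = (of_nat p :: 'a) * c"
  proof
    fix k assume k: "k \<in> {..p} - {0,p}"
    have "p dvd (p choose k)" using k assms by (intro dvd_choose_prime) auto
    then obtain m where m: "p choose k = p * m" by blast
    show "\<exists>c. of_nat (p choose k) * a ^ k * b ^ (p - k) = (of_nat p :: 'a) * c"
      by (rule exI[of _ "of_nat m * a ^ k * b ^ (p - k)"]) (simp add: m mult.assoc)
  qed
  then obtain c where c: "\<forall>k\<in>{..p} - {0,p}. of_nat (p choose k) * a ^ k * b ^ (p - k) = (of_nat p :: 'a) * c k"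
    by metis
  have "(\<Sum>k\<in>{..p} - {0,p}. of_nat (p choose k) * a ^ k * b ^ (p - k)) = of_nat p * (\<Sum>k\<in>{..p} - {0,p}. c k)"
    using c by (simp add: sum_distrib_left)
  then show ?thesis unfolding pcong_def eq by auto
qed

lemma freshman_neg:
  fixes b :: "'a::comm_ring_1"
  assumes "prime p"
  shows "pcong p ((- b) ^ p) (- (b ^ p))"
proof (cases "p = 2")
  case True
  then show ?thesis unfolding pcong_def by (intro exI[of _ "b^2"]) (simp add: algebra_simps)
next
  case False
  then have "odd p" using assms prime_odd_nat prime_ge_2_nat by (metis le_neq_implies_less)
  then show ?thesis by (simp add: power_minus_odd)
qed

lemma freshman_diff:
  fixes a b :: "'a::comm_ring_1"
  assumes "prime p"
  shows "pcong p ((a - b) ^ p) (a ^ p - b ^ p)"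
proof -
  have "pcong p ((a + (-b)) ^ p) (a ^ p + (-b) ^ p)" by (rule freshman[OF assms])
  moreover have "pcong p (a ^ p + (-b) ^ p) (a ^ p + - (b ^ p))"
    by (intro pcong_add pcong_refl freshman_neg[OF assms])
  ultimately show ?thesis by (metis pcong_trans diff_conv_add_uminus)
qed


abbreviation "lk \<equiv> Poly_Mapping.lookup"
abbreviation "ks \<equiv> Poly_Mapping.keys"

definition pushf :: "('g \<Rightarrow> 'h) \<Rightarrow> ('g \<Rightarrow>\<^sub>0 int) \<Rightarrow> ('h \<Rightarrow>\<^sub>0 int)" where
  "pushf \<psi> A = frag_extend (\<lambda>u. frag_of (\<psi> u)) A"

lemma pushf_0[simp]: "pushf \<psi> 0 = 0" by (simp add: pushf_def)
lemma pushf_frag_of[simp]: "pushf \<psi> (frag_of u) = frag_of (\<psi> u)" by (simp add: pushf_def)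
lemma pushf_diff: "pushf \<psi> (a - b) = pushf \<psi> a - pushf \<psi> b" by (simp add: pushf_def frag_extend_diff)
lemma pushf_add: "pushf \<psi> (a + b) = pushf \<psi> a + pushf \<psi> b" by (simp add: pushf_def frag_extend_add)

lemma lookup_push: "lk (pushf \<psi> A) n = (\<Sum>u\<in>{u\<in>ks A. \<psi> u = n}. lk A u)"
proof -
  have "lk (pushf \<psi> A) n = (\<Sum>u\<in>ks A. lk A u * (if \<psi> u = n then 1 else 0))"
    by (auto simp: pushf_def frag_extend_def lookup_sum lookup_single intro!: sum.cong)
  also have "\<dots> = (\<Sum>u\<in>ks A. if \<psi> u = n then lk A u else 0)"
    by (intro sum.cong) auto
  also have "\<dots> = (\<Sum>u\<in>{u\<in>ks A. \<psi> u = n}. lk A u)"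
    by (simp add: sum.inter_filter)
  finally show ?thesis .
qed

lemma frag_of_mult: "frag_of (u::'g::monoid_add) * frag_of v = frag_of (u + v)"
  by (simp add: mult_single)

lemma pushf_mult:
  fixes \<psi> :: "'g::comm_monoid_add \<Rightarrow> 'h::comm_monoid_add"
  assumes add: "\<And>x y. \<psi> (x + y) = \<psi> x + \<psi> y"
  shows "pushf \<psi> (A * B) = pushf \<psi> A * pushf \<psi> B"
proof -
  have *: "pushf \<psi> (frag_of u * B) = pushf \<psi> (frag_of u) * pushf \<psi> B" for u
    using subset_UNIV[of "ks B"]
  proof (induction B rule: frag_induction)
    case zero show ?case by simp
  next
    case (one x) show ?case by (simp add: mult_single add)
  next
    case (diff a b) then show ?case by (simp add: right_diff_distrib pushf_diff)
  qed
  show ?thesis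
    using subset_UNIV[of "ks A"]
  proof (induction A rule: frag_induction)
    case zero show ?case by simp
  next
    case (one x) show ?case by (rule *)
  next
    case (diff a b) then show ?case by (simp add: left_diff_distrib pushf_diff)
  qed
qed

lemma pushf_one:
  assumes "\<psi> 0 = 0"
  shows "pushf \<psi> (1 :: 'g::monoid_add \<Rightarrow>\<^sub>0 int) = (1 :: 'h::monoid_add \<Rightarrow>\<^sub>0 int)"
proof -
  have "pushf \<psi> (1 :: 'g \<Rightarrow>\<^sub>0 int) = pushf \<psi> (frag_of 0)" by simp
  also have "\<dots> = frag_of (\<psi> 0)" by (rule pushf_frag_of)
  also have "\<dots> = 1" using assms by simp
  finally show ?thesis .
qed

lemma pushf_power:
  fixes \<psi> :: "'g::comm_monoid_add \<Rightarrow> 'h::comm_monoid_add"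
  assumes add: "\<And>x y. \<psi> (x + y) = \<psi> x + \<psi> y" and "\<psi> 0 = 0"
  shows "pushf \<psi> (A ^ n) = pushf \<psi> A ^ n"
  using assms by (induction n) (simp_all add: pushf_one pushf_mult)

lemma pushf_of_nat:
  assumes "\<psi> 0 = 0"
  shows "pushf \<psi> (of_nat p :: 'g::monoid_add \<Rightarrow>\<^sub>0 int) = (of_nat p :: 'h::monoid_add \<Rightarrow>\<^sub>0 int)"
proof -
  have e1: "(of_nat p :: 'g \<Rightarrow>\<^sub>0 int) = frag_cmul (int p) 1"
    by (rule poly_mapping_eqI) (simp add: lookup_of_nat lookup_single lookup_one when_def)
  have e2: "(of_nat p :: 'h \<Rightarrow>\<^sub>0 int) = frag_cmul (int p) 1"
    by (rule poly_mapping_eqI) (simp add: lookup_of_nat lookup_single lookup_one when_def)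
  have o: "pushf \<psi> (1::'g \<Rightarrow>\<^sub>0 int) = (1::'h \<Rightarrow>\<^sub>0 int)" using assms by (rule pushf_one)
  show ?thesis unfolding e1 e2 using o by (simp add: pushf_def frag_extend_cmul)
qed

lemma pcong_pushf:
  fixes \<psi> :: "'g::comm_monoid_add \<Rightarrow> 'h::comm_monoid_add"
  assumes add: "\<And>x y. \<psi> (x + y) = \<psi> x + \<psi> y" and z: "\<psi> 0 = 0"
    and "pcong p A B"
  shows "pcong p (pushf \<psi> A) (pushf \<psi> B)"
proof -
  obtain E where "A - B = of_nat p * E" using assms(3) unfolding pcong_def by blast
  then have "pushf \<psi> A - pushf \<psi> B = of_nat p * pushf \<psi> E"
    using z by (metis pushf_diff pushf_mult[OF add] pushf_of_nat)
  then show ?thesis unfolding pcong_def by blast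
qed

lemma pushf_compose: "pushf \<phi> (pushf \<psi> A) = pushf (\<phi> \<circ> \<psi>) A"
proof -
  have "(\<lambda>u. frag_of (\<psi> u)) = frag_of \<circ> \<psi>" by auto
  then show ?thesis unfolding pushf_def by (simp only: frag_extend_compose) (simp add: o_def)
qed

section \<open>Frobenius\<close>

lemma frag_of_power: "(frag_of (u::'g::comm_monoid_add)) ^ n = frag_of (\<Sum>i<n. u)"
  by (induction n) (simp_all add: frag_of_mult add.commute)

lemma frobenius1:
  assumes "prime p"
  shows "pcong p ((A :: int \<Rightarrow>\<^sub>0 int) ^ p) (pushf (\<lambda>n. int p * n) A)"
  using subset_UNIV[of "ks A"]
proof (induction A rule: frag_induction)
  case zero show ?case using assms prime_gt_0_nat by (simp add: zero_power)
next
  case (one x) show ?case by (simp add: frag_of_power)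
next
  case (diff a b)
  have "pcong p ((a - b) ^ p) (a ^ p - b ^ p)" by (rule freshman_diff[OF assms])
  moreover have "pcong p (a ^ p - b ^ p) (pushf (\<lambda>n. int p * n) a - pushf (\<lambda>n. int p * n) b)"
    using diff by (rule pcong_diff)
  ultimately show ?case by (metis pcong_trans pushf_diff)
qed

lemma frobenius:
  assumes "prime p"
  shows "pcong p ((A :: int \<Rightarrow>\<^sub>0 int) ^ (p ^ e)) (pushf (\<lambda>n. int (p ^ e) * n) A)"
proof (induction e)
  case 0
  have "pushf (\<lambda>n. n) A = A" unfolding pushf_def by (simp flip: frag_expansion)
  then show ?case by simp
next
  case (Suc e)
  have "A ^ (p ^ Suc e) = (A ^ (p ^ e)) ^ p" by (simp add: power_mult[symmetric] mult.commute)
  moreover have "pcong p ((A ^ (p ^ e)) ^ p) ((pushf (\<lambda>n. int (p ^ e) * n) A) ^ p)"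
    by (rule pcong_power[OF Suc])
  moreover have "pcong p ((pushf (\<lambda>n. int (p ^ e) * n) A) ^ p) (pushf (\<lambda>n. int p * n) (pushf (\<lambda>n. int (p ^ e) * n) A))"
    by (rule frobenius1[OF assms])
  moreover have "pushf (\<lambda>n. int p * n) (pushf (\<lambda>n. int (p ^ e) * n) A) = pushf (\<lambda>n. int (p ^ Suc e) * n) A"
    by (simp add: pushf_compose o_def mult.assoc)
  ultimately show ?case by (metis pcong_trans)
qed


definition Sp :: "nat \<Rightarrow> ('g \<Rightarrow>\<^sub>0 int) \<Rightarrow> 'g set" where
  "Sp p A = {n. \<not> int p dvd lk A n}"

lemma Sp_subset_keys: "Sp p A \<subseteq> ks A"
  unfolding Sp_def by (auto simp: in_keys_iff)

lemma finite_Sp[simp]: "finite (Sp p A)"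
  by (rule finite_subset[OF Sp_subset_keys]) simp

lemma lookup_of_nat_mult: "lk (of_nat p * (E :: 'g::monoid_add \<Rightarrow>\<^sub>0 int)) n = int p * lk E n"
proof -
  have "(of_nat p :: 'g \<Rightarrow>\<^sub>0 int) = Poly_Mapping.single 0 (int p)"
    by simp
  then have "of_nat p * E = Poly_Mapping.map ((*) (int p)) E"
    by (simp add: mult_map_scale_conv_mult)
  then show ?thesis by (simp add: map.rep_eq when_def)
qed

lemma Sp_pcong:
  assumes "pcong p (A :: 'g::comm_monoid_add \<Rightarrow>\<^sub>0 int) B"
  shows "Sp p A = Sp p B"
proof -
  obtain E where E: "A - B = of_nat p * E" using assms unfolding pcong_def by blast
  have "lk A n - lk B n = int p * lk E n" for n
    by (metis E lookup_minus lookup_of_nat_mult)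
  then have "lk A n = lk B n + int p * lk E n" for n by (metis diff_add_cancel add.commute)
  then show ?thesis unfolding Sp_def by (auto simp: dvd_add_left_iff)
qed

lemma lookup_mult_conv:
  fixes A B :: "'g::ab_group_add \<Rightarrow>\<^sub>0 int"
  shows "lk (A * B) n = (\<Sum>u\<in>ks A. lk A u * lk B (n - u))"
proof -
  have inner: "(\<Sum>q. lk B q when n = l + q) = lk B (n - l)" for l
  proof -
    have "(\<Sum>q. lk B q when n = l + q) = (\<Sum>q. lk B q when q = n - l)"
      by (rule arg_cong[where f=Sum_any]) (auto simp: when_def fun_eq_iff algebra_simps)
    also have "\<dots> = lk B (n - l)" by (rule Sum_any_when_equal)
    finally show ?thesis .
  qed
  have "lk (A * B) n = (\<Sum>l. lk A l * lk B (n - l))"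
    by (simp add: lookup_mult inner)
  also have "\<dots> = (\<Sum>l\<in>ks A. lk A l * lk B (n - l))"
    by (rule Sum_any.expand_superset) (auto simp: in_keys_iff)
  finally show ?thesis .
qed

definition red :: "nat \<Rightarrow> ('g \<Rightarrow>\<^sub>0 int) \<Rightarrow> ('g \<Rightarrow>\<^sub>0 int)" where
  "red p A = Abs_poly_mapping (\<lambda>n. lk A n mod int p)"

lemma lookup_red: "lk (red p A) n = lk A n mod int p"
proof -
  have "finite {n. lk A n mod int p \<noteq> 0}"
    by (rule finite_subset[of _ "ks A"]) (auto simp: in_keys_iff)
  then show ?thesis unfolding red_def by simp
qed

lemma pcong_red: "pcong p (A :: 'g::comm_monoid_add \<Rightarrow>\<^sub>0 int) (red p A)"
proof -
  have fin: "finite {n. lk A n div int p \<noteq> 0}"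
    by (rule finite_subset[of _ "ks A"]) (auto simp: in_keys_iff)
  define E where "E = Abs_poly_mapping (\<lambda>n. lk A n div int p)"
  have "A - red p A = of_nat p * E"
    by (rule poly_mapping_eqI) (simp add: lookup_minus lookup_red lookup_of_nat_mult E_def fin minus_mod_eq_mult_div)
  then show ?thesis unfolding pcong_def by blast
qed

lemma keys_red: "p > 0 \<Longrightarrow> ks (red p A) = Sp p A"
  by (auto simp: in_keys_iff lookup_red Sp_def dvd_eq_mod_eq_0)

section \<open>Extreme exponents (one-dimensional)\<close>

definition mxs :: "nat \<Rightarrow> (int \<Rightarrow>\<^sub>0 int) \<Rightarrow> int" where "mxs p A = Max (Sp p A)"
definition mns :: "nat \<Rightarrow> (int \<Rightarrow>\<^sub>0 int) \<Rightarrow> int" where "mns p A = Min (Sp p A)"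
definition wd :: "nat \<Rightarrow> (int \<Rightarrow>\<^sub>0 int) \<Rightarrow> int" where "wd p A = mxs p A - mns p A"

lemma mxs_in: "Sp p A \<noteq> {} \<Longrightarrow> mxs p A \<in> Sp p A" unfolding mxs_def by simp
lemma mns_in: "Sp p A \<noteq> {} \<Longrightarrow> mns p A \<in> Sp p A" unfolding mns_def by simp
lemma le_mxs: "n \<in> Sp p A \<Longrightarrow> n \<le> mxs p A" unfolding mxs_def by simp
lemma mns_le: "n \<in> Sp p A \<Longrightarrow> mns p A \<le> n" unfolding mns_def by simp

lemma prod_ends:
  assumes "prime p" and SA: "Sp p A \<noteq> {}" and SB: "Sp p B \<noteq> {}"
  shows "Sp p (A * B) \<subseteq> {mns p A + mns p B .. mxs p A + mxs p B}"
    and "mxs p A + mxs p B \<in> Sp p (A * B)"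
    and "mns p A + mns p B \<in> Sp p (A * B)"
proof -
  have p0: "p > 0" using assms(1) prime_gt_0_nat by blast
  define a where "a = red p A"
  define b where "b = red p B"
  have eqS: "Sp p (A * B) = Sp p (a * b)"
    unfolding a_def b_def by (intro Sp_pcong pcong_mult pcong_red)
  have ka: "ks a = Sp p A" and kb: "ks b = Sp p B"
    unfolding a_def b_def using p0 by (simp_all add: keys_red)
  have lk_ab: "lk (a * b) n = (\<Sum>u\<in>Sp p A. lk a u * lk b (n - u))" for n
    using lookup_mult_conv[of a b n] ka by simp
  have zb: "lk b m = 0" if "m \<notin> Sp p B" for m using that kb by (auto simp: in_keys_iff)
  have pa: "\<not> int p dvd lk a u" if "u \<in> Sp p A" for u
    using that p0 unfolding a_def Sp_def by (simp add: lookup_red dvd_eq_mod_eq_0)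
  have pb: "\<not> int p dvd lk b u" if "u \<in> Sp p B" for u
    using that p0 unfolding b_def Sp_def by (simp add: lookup_red dvd_eq_mod_eq_0)
  have primep: "prime (int p)" using assms(1) by simp
  show "Sp p (A * B) \<subseteq> {mns p A + mns p B .. mxs p A + mxs p B}"
  proof
    fix n assume n: "n \<in> Sp p (A * B)"
    show "n \<in> {mns p A + mns p B .. mxs p A + mxs p B}"
    proof (rule ccontr)
      assume "n \<notin> {mns p A + mns p B .. mxs p A + mxs p B}"
      then have "\<forall>u\<in>Sp p A. lk a u * lk b (n - u) = 0"
        using le_mxs[of _ p A] le_mxs[of _ p B] mns_le[of _ p A] mns_le[of _ p B] zb
        by (metis atLeastAtMost_iff add_le_cancel_left add.commute diff_add_cancel le_diff_eq diff_le_eq mult_zero_right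
              le_add_diff_inverse linorder_not_le add_mono)
      then have "(\<Sum>u\<in>Sp p A. lk a u * lk b (n - u)) = 0" by (rule sum.neutral)
      then have "lk (a * b) n = 0" using lk_ab by simp
      then show False using n eqS unfolding Sp_def by auto
    qed
  qed
  show "mxs p A + mxs p B \<in> Sp p (A * B)"
  proof -
    let ?n = "mxs p A + mxs p B"
    have "lk (a * b) ?n = lk a (mxs p A) * lk b (mxs p B) + (\<Sum>u\<in>Sp p A - {mxs p A}. lk a u * lk b (?n - u))"
      using lk_ab[of ?n] mxs_in[OF SA] by (simp add: sum.remove)
    also have "(\<Sum>u\<in>Sp p A - {mxs p A}. lk a u * lk b (?n - u)) = 0"
    proof (intro sum.neutral ballI)
      fix u assume u: "u \<in> Sp p A - {mxs p A}"
      then have "u < mxs p A" using le_mxs[of u p A] by auto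
      then have "?n - u \<notin> Sp p B" using le_mxs[of "?n - u" p B] by auto
      then show "lk a u * lk b (?n - u) = 0" using zb by simp
    qed
    finally have "lk (a * b) ?n = lk a (mxs p A) * lk b (mxs p B)" by simp
    moreover have "\<not> int p dvd lk a (mxs p A) * lk b (mxs p B)"
      using pa[OF mxs_in[OF SA]] pb[OF mxs_in[OF SB]] primep by (simp add: prime_dvd_mult_iff)
    ultimately show ?thesis using eqS unfolding Sp_def by auto
  qed
  show "mns p A + mns p B \<in> Sp p (A * B)"
  proof -
    let ?n = "mns p A + mns p B"
    have "lk (a * b) ?n = lk a (mns p A) * lk b (mns p B) + (\<Sum>u\<in>Sp p A - {mns p A}. lk a u * lk b (?n - u))"
      using lk_ab[of ?n] mns_in[OF SA] by (simp add: sum.remove)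
    also have "(\<Sum>u\<in>Sp p A - {mns p A}. lk a u * lk b (?n - u)) = 0"
    proof (intro sum.neutral ballI)
      fix u assume u: "u \<in> Sp p A - {mns p A}"
      then have "u > mns p A" using mns_le[of u p A] by auto
      then have "?n - u \<notin> Sp p B" using mns_le[of "?n - u" p B] by auto
      then show "lk a u * lk b (?n - u) = 0" using zb by simp
    qed
    finally have "lk (a * b) ?n = lk a (mns p A) * lk b (mns p B)" by simp
    moreover have "\<not> int p dvd lk a (mns p A) * lk b (mns p B)"
      using pa[OF mns_in[OF SA]] pb[OF mns_in[OF SB]] primep by (simp add: prime_dvd_mult_iff)
    ultimately show ?thesis using eqS unfolding Sp_def by auto
  qed
qed

lemma prod_ends':
  assumes "prime p" and SA: "Sp p A \<noteq> {}" and SB: "Sp p B \<noteq> {}"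
  shows "Sp p (A * B) \<noteq> {}" "mxs p (A * B) = mxs p A + mxs p B" "mns p (A * B) = mns p A + mns p B"
proof -
  note e = prod_ends[OF assms]
  show "Sp p (A * B) \<noteq> {}" using e(2) by blast
  show ne: "mxs p (A * B) = mxs p A + mxs p B"
  proof (rule antisym)
    show "mxs p (A * B) \<le> mxs p A + mxs p B"
    proof -
      have "Sp p (A * B) \<noteq> {}" using e(2) by blast
      then have "mxs p (A * B) \<in> Sp p (A * B)" by (rule mxs_in)
      then show ?thesis using e(1) by auto
    qed
    show "mxs p A + mxs p B \<le> mxs p (A * B)" using le_mxs[OF e(2)] .
  qed
  show "mns p (A * B) = mns p A + mns p B"
  proof (rule antisym)
    show "mns p A + mns p B \<le> mns p (A * B)"
    proof -
      have "Sp p (A * B) \<noteq> {}" using e(2) by blast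
      then have "mns p (A * B) \<in> Sp p (A * B)" by (rule mns_in)
      then show ?thesis using e(1) by auto
    qed
    show "mns p (A * B) \<le> mns p A + mns p B" using mns_le[OF e(3)] .
  qed
qed

lemma power_ends:
  assumes "prime p" and SA: "Sp p A \<noteq> {}" and SH: "Sp p H \<noteq> {}"
  shows "Sp p (A * H ^ b) \<noteq> {} \<and> mxs p (A * H ^ b) = mxs p A + int b * mxs p H
       \<and> mns p (A * H ^ b) = mns p A + int b * mns p H"
proof (induction b)
  case 0 then show ?case using SA by simp
next
  case (Suc b)
  have eq: "A * H ^ Suc b = (A * H ^ b) * H" by (simp add: mult.assoc mult.commute)
  show ?case unfolding eq using prod_ends'[OF assms(1) _ SH, of "A * H ^ b"] Suc by (simp add: algebra_simps)
qed


definition sub :: "int \<Rightarrow> int \<Rightarrow> (int \<Rightarrow>\<^sub>0 int) \<Rightarrow> (int \<Rightarrow>\<^sub>0 int)" where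
  "sub Q r C = Abs_poly_mapping (\<lambda>y. lk C (r + Q * y))"

lemma lookup_sub:
  assumes "Q \<noteq> 0" shows "lk (sub Q r C) y = lk C (r + Q * y)"
proof -
  have inj: "inj (\<lambda>y. r + Q * y)" using assms by (auto simp: inj_def)
  have "{y. lk C (r + Q * y) \<noteq> 0} = (\<lambda>y. r + Q * y) -` ks C" by (auto simp: in_keys_iff)
  then have "finite {y. lk C (r + Q * y) \<noteq> 0}" using finite_vimageI[OF _ inj] by simp
  then show ?thesis unfolding sub_def by simp
qed

lemma Sp_sub: "Q \<noteq> 0 \<Longrightarrow> Sp p (sub Q r C) = {y. r + Q * y \<in> Sp p C}"
  by (simp add: Sp_def lookup_sub)

definition sc :: "int \<Rightarrow> (int \<Rightarrow>\<^sub>0 int) \<Rightarrow> (int \<Rightarrow>\<^sub>0 int)" where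
  "sc Q B = pushf (\<lambda>n. Q * n) B"

lemma lookup_sc_mult: assumes "Q \<noteq> 0" shows "lk (sc Q B) (Q * v) = lk B v"
proof -
  have e: "{u \<in> ks B. Q * u = Q * v} = ks B \<inter> {v}" using assms by auto
  have "lk (sc Q B) (Q * v) = sum (lk B) (ks B \<inter> {v})" unfolding sc_def lookup_push e ..
  then show ?thesis by (cases "v \<in> ks B") (auto simp: in_keys_iff)
qed

lemma lookup_sc_other: assumes "\<not> Q dvd n" shows "lk (sc Q B) n = 0"
proof -
  have e: "{u \<in> ks B. Q * u = n} = {}" using assms by auto
  show ?thesis unfolding sc_def lookup_push e by simp
qed

lemma keys_sc: assumes "Q \<noteq> 0" shows "ks (sc Q B) = (\<lambda>v. Q * v) ` ks B"
proof
  show "ks (sc Q B) \<subseteq> (\<lambda>v. Q * v) ` ks B"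
  proof
    fix n assume n: "n \<in> ks (sc Q B)"
    then have "Q dvd n" using lookup_sc_other[of Q n B] by (auto simp: in_keys_iff)
    then obtain v where v: "n = Q * v" by blast
    then show "n \<in> (\<lambda>v. Q * v) ` ks B" using n lookup_sc_mult[OF assms] by (auto simp: in_keys_iff)
  qed
  show "(\<lambda>v. Q * v) ` ks B \<subseteq> ks (sc Q B)"
    using lookup_sc_mult[OF assms] by (auto simp: in_keys_iff)
qed

lemma residue_identity:
  assumes "Q \<noteq> 0"
  shows "lk (C * sc Q B) (r + Q * y) = lk (sub Q r C * B) y"
proof -
  have "lk (C * sc Q B) (r + Q * y) = lk (sc Q B * C) (r + Q * y)" by (simp add: mult.commute)
  also have "\<dots> = (\<Sum>u\<in>ks (sc Q B). lk (sc Q B) u * lk C (r + Q * y - u))"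
    by (rule lookup_mult_conv)
  also have "\<dots> = (\<Sum>v\<in>ks B. lk (sc Q B) (Q * v) * lk C (r + Q * y - Q * v))"
  proof -
    have inj: "inj_on (\<lambda>v. Q * v) (ks B)" using assms by (auto simp: inj_on_def)
    show ?thesis unfolding keys_sc[OF assms] using sum.reindex[OF inj] by (simp add: o_def)
  qed
  also have "\<dots> = (\<Sum>v\<in>ks B. lk B v * lk (sub Q r C) (y - v))"
    by (intro sum.cong refl) (simp add: lookup_sc_mult[OF assms] lookup_sub[OF assms] right_diff_distrib add_diff_eq)
  also have "\<dots> = lk (B * sub Q r C) y" by (rule lookup_mult_conv[symmetric])
  finally show ?thesis by (simp add: mult.commute)
qed

lemma card_residues:
  assumes "Q > 0" and R: "R \<subseteq> {0..<Q}"
  shows "(\<Sum>r\<in>R. card (Sp p (sub Q r C * B))) \<le> card (Sp p (C * sc Q B))"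
proof -
  have finR: "finite R" using R finite_subset by blast
  let ?f = "\<lambda>r. (\<lambda>y. r + Q * y) ` Sp p (sub Q r C * B)"
  have sub1: "(\<Union>r\<in>R. ?f r) \<subseteq> Sp p (C * sc Q B)"
    using assms(1) by (auto simp: Sp_def residue_identity)
  have disj: "\<forall>r\<in>R. \<forall>r'\<in>R. r \<noteq> r' \<longrightarrow> ?f r \<inter> ?f r' = {}"
  proof (intro ballI impI)
    fix r r' assume rr: "r \<in> R" "r' \<in> R" "r \<noteq> r'"
    show "?f r \<inter> ?f r' = {}"
    proof (rule ccontr)
      assume "?f r \<inter> ?f r' \<noteq> {}"
      then obtain y y' where "r + Q * y = r' + Q * y'" by auto
      then have "(r + Q * y) mod Q = (r' + Q * y') mod Q" by simp
      moreover have "r mod Q = r" "r' mod Q = r'" using rr R by (auto intro: mod_pos_pos_trivial)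
      ultimately have "r = r'" by simp
      then show False using rr by simp
    qed
  qed
  have "(\<Sum>r\<in>R. card (Sp p (sub Q r C * B))) = (\<Sum>r\<in>R. card (?f r))"
    using assms(1) by (intro sum.cong refl, subst card_image) (auto simp: inj_on_def)
  also have "\<dots> = card (\<Union>r\<in>R. ?f r)"
    using finR disj by (intro card_UN_disjoint[symmetric]) auto
  also have "\<dots> \<le> card (Sp p (C * sc Q B))"
    by (rule card_mono[OF finite_Sp sub1])
  finally show ?thesis .
qed

lemma wd_sub:
  assumes "Q > 0" "Sp p (sub Q r C) \<noteq> {}"
  shows "Q * wd p (sub Q r C) \<le> wd p C"
proof -
  have a: "r + Q * mxs p (sub Q r C) \<in> Sp p C" using mxs_in[OF assms(2)] Sp_sub[of Q p r C] assms(1) by auto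
  have b: "r + Q * mns p (sub Q r C) \<in> Sp p C" using mns_in[OF assms(2)] Sp_sub[of Q p r C] assms(1) by auto
  have "r + Q * mxs p (sub Q r C) \<le> mxs p C" using le_mxs[OF a] .
  moreover have "mns p C \<le> r + Q * mns p (sub Q r C)" using mns_le[OF b] .
  ultimately show ?thesis unfolding wd_def by (simp add: right_diff_distrib)
qed

lemma wd_nonneg: "Sp p A \<noteq> {} \<Longrightarrow> 0 \<le> wd p A"
  unfolding wd_def using mns_le[OF mxs_in] by fastforce

section \<open>Counting digits equal to one\<close>

function gb :: "nat \<Rightarrow> nat \<Rightarrow> nat" where
  "gb Q j = (if Q < 2 \<or> j = 0 then 0 else (if j mod Q = 1 then 1 else 0) + gb Q (j div Q))"
  by auto
termination by (relation "Wellfounded.measure (\<lambda>(Q, j). j)") auto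

declare gb.simps[simp del]

lemma gb_0[simp]: "gb Q 0 = 0" by (simp add: gb.simps)

lemma gb_step: "Q \<ge> 2 \<Longrightarrow> gb Q j = (if j mod Q = 1 then 1 else 0) + gb Q (j div Q)"
  by (cases "j = 0") (simp_all add: gb.simps[of Q j])

lemma growth:
  assumes p: "prime p" and Q: "Q = p ^ e" "e \<ge> 1"
    and H2: "card (Sp p H) \<ge> 2"
    and K: "wd p H \<le> K" "K + wd p H < int Q"
  shows "Sp p A \<noteq> {} \<Longrightarrow> wd p A \<le> K \<Longrightarrow> 2 ^ gb Q j \<le> card (Sp p (A * H ^ j))"
proof (induction j arbitrary: A rule: less_induct)
  case (less j)
  have p2: "p \<ge> 2" using p prime_ge_2_nat by blast
  have Q2: "Q \<ge> 2" using Q p2 by (metis dual_order.trans power_increasing power_one_right zero_le_one le_trans one_le_numeral p2 less_imp_le_nat Suc_le_eq)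
  have SH: "Sp p H \<noteq> {}" using H2 by auto
  have d1: "wd p H \<ge> 1"
  proof -
    have "\<not> card (Sp p H) \<le> Suc 0" using H2 by simp
    then obtain x y where xy: "x \<in> Sp p H" "y \<in> Sp p H" "x \<noteq> y"
      using card_le_Suc0_iff_eq[OF finite_Sp] by blast
    have "mns p H \<le> x" "mns p H \<le> y" "x \<le> mxs p H" "y \<le> mxs p H"
      using xy by (auto intro: mns_le le_mxs)
    then show ?thesis unfolding wd_def using xy(3) by linarith
  qed
  show ?case
  proof (cases "j = 0")
    case True
    have "card (Sp p A) \<ge> 1" using less.prems(1) by (simp add: Suc_le_eq card_gt_0_iff)
    then show ?thesis using True by simp
  next
    case False
    define b where "b = j mod Q"
    define j' where "j' = j div Q"
    have jdec: "j = b + Q * j'" unfolding b_def j'_def by simp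
    have j'lt: "j' < j" unfolding j'_def using False Q2 by simp
    have bQ: "b < Q" unfolding b_def using Q2 by simp
    define C where "C = A * H ^ b"
    have pe: "pcong p ((H ^ j') ^ (p ^ e)) (pushf (\<lambda>n. int (p ^ e) * n) (H ^ j'))"
      by (rule frobenius[OF p])
    have hq: "H ^ (Q * j') = (H ^ j') ^ Q" by (metis power_mult mult.commute)
    have "A * H ^ j = C * (H ^ j') ^ Q"
      unfolding C_def jdec by (simp only: power_add hq mult.assoc)
    then have pc: "pcong p (A * H ^ j) (C * sc (int Q) (H ^ j'))"
      unfolding sc_def Q using pe by (simp add: pcong_mult)
    have eqS: "Sp p (A * H ^ j) = Sp p (C * sc (int Q) (H ^ j'))" by (rule Sp_pcong[OF pc])
    note pw = power_ends[OF p less.prems(1) SH, of b]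
    have SC: "Sp p C \<noteq> {}" using pw C_def by simp
    have wC: "wd p C = wd p A + int b * wd p H" using pw unfolding C_def wd_def by (simp add: algebra_simps)
    have Qpos: "int Q > 0" using Q2 by simp
    have IH: "2 ^ gb Q j' \<le> card (Sp p (sub (int Q) r C * H ^ j'))"
      if r: "Sp p (sub (int Q) r C) \<noteq> {}" for r
    proof -
      have "int Q * wd p (sub (int Q) r C) \<le> wd p C" by (rule wd_sub[OF Qpos r])
      also have "\<dots> \<le> K + int (Q - 1) * wd p H"
      proof -
        have "int b \<le> int (Q - 1)" using bQ by simp
        then have "int b * wd p H \<le> int (Q - 1) * wd p H" using d1 by (intro mult_right_mono) auto
        then show ?thesis using wC less.prems(2) by simp
      qed
      also have "\<dots> \<le> K + int (Q - 1) * K"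
        using K(1) by (intro add_left_mono mult_left_mono) auto
      also have "\<dots> = int Q * K" using Q2 by (simp add: of_nat_diff algebra_simps)
      finally have "wd p (sub (int Q) r C) \<le> K" using Qpos by simp
      then show ?thesis using less.IH[OF j'lt r] by simp
    qed
    have gbj: "gb Q j = (if b = 1 then 1 else 0) + gb Q j'"
      unfolding b_def j'_def by (rule gb_step[OF Q2])
    have mem: "Sp p (sub (int Q) (n mod int Q) C) \<noteq> {}" if "n \<in> Sp p C" for n
    proof -
      have "n mod int Q + int Q * (n div int Q) \<in> Sp p C" using that by simp
      then have "n div int Q \<in> Sp p (sub (int Q) (n mod int Q) C)"
        using Sp_sub[of "int Q" p "n mod int Q" C] Qpos by simp
      then show ?thesis by blast
    qed
    show ?thesis
    proof (cases "b = 1")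
      case False
      let ?r = "mxs p C mod int Q"
      have "(\<Sum>r\<in>{?r}. card (Sp p (sub (int Q) r C * H ^ j'))) \<le> card (Sp p (C * sc (int Q) (H ^ j')))"
        by (rule card_residues[OF Qpos]) (use Qpos in auto)
      moreover have "2 ^ gb Q j' \<le> card (Sp p (sub (int Q) ?r C * H ^ j'))"
        by (rule IH[OF mem[OF mxs_in[OF SC]]])
      ultimately show ?thesis using gbj False eqS by simp
    next
      case True
      let ?r1 = "mxs p C mod int Q" and ?r2 = "mns p C mod int Q"
      have wC1: "wd p C \<ge> 1" "wd p C < int Q" using wC True less.prems(2) d1 K(2) wd_nonneg[OF less.prems(1)] by auto
      have "?r1 \<noteq> ?r2"
      proof
        assume "?r1 = ?r2"
        then have "int Q dvd (mxs p C - mns p C)" by (simp add: mod_eq_dvd_iff)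
        then show False using wC1 unfolding wd_def by (metis zdvd_imp_le not_less zero_less_one less_le_trans)
      qed
      then have "(\<Sum>r\<in>{?r1, ?r2}. card (Sp p (sub (int Q) r C * H ^ j'))) =
          card (Sp p (sub (int Q) ?r1 C * H ^ j')) + card (Sp p (sub (int Q) ?r2 C * H ^ j'))" by simp
      moreover have "(\<Sum>r\<in>{?r1, ?r2}. card (Sp p (sub (int Q) r C * H ^ j'))) \<le> card (Sp p (C * sc (int Q) (H ^ j')))"
        by (rule card_residues[OF Qpos]) (use Qpos in auto)
      moreover have "2 ^ gb Q j' \<le> card (Sp p (sub (int Q) ?r1 C * H ^ j'))"
        by (rule IH[OF mem[OF mxs_in[OF SC]]])
      moreover have "2 ^ gb Q j' \<le> card (Sp p (sub (int Q) ?r2 C * H ^ j'))"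
        by (rule IH[OF mem[OF mns_in[OF SC]]])
      ultimately show ?thesis using gbj True eqS by simp
    qed
  qed
qed


definition cnt :: "nat \<Rightarrow> nat \<Rightarrow> nat \<Rightarrow> nat" where
  "cnt Q B k = card {j. j < Q ^ B \<and> gb Q j \<le> k}"

lemma gb_decomp:
  assumes Q: "Q \<ge> 2" and b: "b < Q"
  shows "gb Q (b + Q * j) = (if b = 1 then 1 else 0) + gb Q j"
proof -
  have e: "gb Q (b + Q * j) = (if (b + Q * j) mod Q = 1 then 1 else 0) + gb Q ((b + Q * j) div Q)"
    by (rule gb_step[OF Q])
  have m: "(b + Q * j) mod Q = b" and d: "(b + Q * j) div Q = j" using assms by simp_all
  show ?thesis using e unfolding m d .
qed

lemma cnt_step:
  assumes Q: "Q \<ge> 2"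
  shows "cnt Q (Suc B) k \<le> (Q - 1) * cnt Q B k + (if k = 0 then 0 else cnt Q B (k - 1))"
proof -
  let ?S = "\<lambda>b. {j'. j' < Q ^ B \<and> (if b = 1 then 1 else 0) + gb Q j' \<le> k}"
  have eq: "{j. j < Q ^ Suc B \<and> gb Q j \<le> k} = (\<Union>b\<in>{..<Q}. (\<lambda>j'. b + Q * j') ` ?S b)"
  proof (intro equalityI subsetI)
    fix j assume j: "j \<in> {j. j < Q ^ Suc B \<and> gb Q j \<le> k}"
    have jd: "j = j mod Q + Q * (j div Q)" by simp
    have "j div Q < Q ^ B" using j Q by (simp add: less_mult_imp_div_less mult.commute)
    moreover have "gb Q j = (if j mod Q = 1 then 1 else 0) + gb Q (j div Q)"
      by (rule gb_step[OF Q])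
    ultimately have "j div Q \<in> ?S (j mod Q)" using j by auto
    moreover have "j mod Q \<in> {..<Q}" using Q by simp
    ultimately show "j \<in> (\<Union>b\<in>{..<Q}. (\<lambda>j'. b + Q * j') ` ?S b)" using jd by blast
  next
    fix j assume "j \<in> (\<Union>b\<in>{..<Q}. (\<lambda>j'. b + Q * j') ` ?S b)"
    then obtain b j' where b: "b < Q" and j': "j' \<in> ?S b" and jj: "j = b + Q * j'" by auto
    have "b + Q * j' < Q + Q * j'" using b by simp
    also have "\<dots> = Q * (j' + 1)" by (simp add: algebra_simps)
    also have "\<dots> \<le> Q * Q ^ B" using j' by (intro mult_left_mono) auto
    finally have "j < Q ^ Suc B" using jj by simp
    moreover have "gb Q j \<le> k" using gb_decomp[OF Q b, of j'] j' jj by simp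
    ultimately show "j \<in> {j. j < Q ^ Suc B \<and> gb Q j \<le> k}" by simp
  qed
  have fin: "finite (?S b)" for b by simp
  have "cnt Q (Suc B) k = card (\<Union>b\<in>{..<Q}. (\<lambda>j'. b + Q * j') ` ?S b)"
    unfolding cnt_def eq ..
  also have "\<dots> = (\<Sum>b<Q. card ((\<lambda>j'. b + Q * j') ` ?S b))"
  proof (rule card_UN_disjoint)
    show "finite {..<Q}" by simp
    show "\<forall>i\<in>{..<Q}. finite ((\<lambda>j'. i + Q * j') ` ?S i)" by simp
    show "\<forall>i\<in>{..<Q}. \<forall>j\<in>{..<Q}. i \<noteq> j \<longrightarrow> (\<lambda>j'. i + Q * j') ` ?S i \<inter> (\<lambda>j'. j + Q * j') ` ?S j = {}"
    proof (intro ballI impI)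
      fix i j assume ij: "i \<in> {..<Q}" "j \<in> {..<Q}" "i \<noteq> j"
      show "(\<lambda>j'. i + Q * j') ` ?S i \<inter> (\<lambda>j'. j + Q * j') ` ?S j = {}"
      proof (rule ccontr)
        assume "(\<lambda>j'. i + Q * j') ` ?S i \<inter> (\<lambda>j'. j + Q * j') ` ?S j \<noteq> {}"
        then obtain x y where "i + Q * x = j + Q * y" by auto
        then have "(i + Q * x) mod Q = (j + Q * y) mod Q" by simp
        then show False using ij by simp
      qed
    qed
  qed
  also have "\<dots> = (\<Sum>b<Q. card (?S b))"
    using Q by (intro sum.cong refl card_image) (auto simp: inj_on_def)
  also have "\<dots> = (\<Sum>b\<in>{..<Q} - {1}. card (?S b)) + card (?S 1)"
    using Q by (subst sum.remove[of _ 1]) auto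
  also have "(\<Sum>b\<in>{..<Q} - {1}. card (?S b)) = (\<Sum>b\<in>{..<Q} - {1}. cnt Q B k)"
    by (intro sum.cong refl) (auto simp: cnt_def)
  also have "\<dots> = (Q - 1) * cnt Q B k" using Q by simp
  also have "card (?S 1) = (if k = 0 then 0 else cnt Q B (k - 1))"
  proof (cases "k = 0")
    case True then show ?thesis by simp
  next
    case False
    then have "?S 1 = {j. j < Q ^ B \<and> gb Q j \<le> k - 1}" by auto
    then show ?thesis using False by (simp add: cnt_def)
  qed
  finally show ?thesis by simp
qed

lemma pow_succ_ge: "(x::nat) \<ge> 1 \<Longrightarrow> k \<ge> 1 \<Longrightarrow> x ^ k + x ^ (k - 1) \<le> (x + 1) ^ k"
proof -
  assume x: "x \<ge> 1" and k: "k \<ge> 1"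
  obtain m where m: "k = Suc m" using k by (cases k) auto
  have "x ^ m \<le> (x + 1) ^ m" by (simp add: power_mono)
  then have "(x + 1) * x ^ m \<le> (x + 1) * (x + 1) ^ m" by (rule mult_left_mono) simp
  moreover have "x ^ k + x ^ (k - 1) = (x + 1) * x ^ m" using m by (simp add: algebra_simps)
  moreover have "(x + 1) ^ k = (x + 1) * (x + 1) ^ m" using m by simp
  ultimately show ?thesis by simp
qed

lemma cnt_bound:
  assumes Q: "Q \<ge> 2"
  shows "cnt Q B k \<le> (B + 1) ^ k * (Q - 1) ^ B"
proof (induction B arbitrary: k)
  case 0
  have "{j. j < Q ^ 0 \<and> gb Q j \<le> k} = {0}" by auto
  then show ?case by (simp add: cnt_def)
next
  case (Suc B)
  show ?case
  proof (cases "k = 0")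
    case True
    then show ?thesis using cnt_step[OF Q, of B k] Suc[of k] by (simp add: mult.commute mult_le_mono2 le_trans)
  next
    case False
    define q where "q = Q - 1"
    have q1: "q \<ge> 1" using Q unfolding q_def by simp
    have "cnt Q (Suc B) k \<le> (Q - 1) * cnt Q B k + cnt Q B (k - 1)"
      using cnt_step[OF Q, of B k] False by simp
    also have "\<dots> \<le> (Q - 1) * ((B + 1) ^ k * (Q - 1) ^ B) + (B + 1) ^ (k - 1) * (Q - 1) ^ B"
      using Suc[of k] Suc[of "k - 1"] by (intro add_mono mult_left_mono) auto
    also have "\<dots> = q * ((B + 1) ^ k * q ^ B) + (B + 1) ^ (k - 1) * q ^ B"
      unfolding q_def ..
    also have "\<dots> \<le> q * ((B + 1) ^ k * q ^ B) + q * ((B + 1) ^ (k - 1) * q ^ B)"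
      using q1 by (intro add_left_mono) simp
    also have "\<dots> = ((B + 1) ^ k + (B + 1) ^ (k - 1)) * q ^ Suc B"
      by (simp add: algebra_simps)
    also have "\<dots> \<le> (B + 2) ^ k * q ^ Suc B"
      using pow_succ_ge[of "B + 1" k] False by (intro mult_right_mono) auto
    finally show ?thesis unfolding q_def by simp
  qed
qed

lemma poly_geom_tendsto:
  fixes r :: real
  assumes "0 < r" "r < 1"
  shows "(\<lambda>n. real (n + 1) ^ m * r ^ n) \<longlonglongrightarrow> 0"
proof (cases "m = 0")
  case True
  then show ?thesis using assms by (simp add: LIMSEQ_power_zero)
next
  case False
  define s where "s = root m r"
  have s: "0 < s" "s < 1" "s ^ m = r" using assms False unfolding s_def
    by (auto simp: real_root_lt_1_iff real_root_pow_pos)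
  have "(\<lambda>n. real n * s ^ n) \<longlonglongrightarrow> 0" using powser_times_n_limit_0[of s] s by simp
  moreover have "(\<lambda>n. s ^ n) \<longlonglongrightarrow> 0" using s by (simp add: LIMSEQ_power_zero)
  ultimately have "(\<lambda>n. real n * s ^ n + s ^ n) \<longlonglongrightarrow> 0 + 0" by (rule tendsto_add)
  then have "(\<lambda>n. real (n + 1) * s ^ n) \<longlonglongrightarrow> 0" by (simp add: algebra_simps)
  then have "(\<lambda>n. (real (n + 1) * s ^ n) ^ m) \<longlonglongrightarrow> 0 ^ m" by (rule tendsto_power)
  moreover have "(real (n + 1) * s ^ n) ^ m = real (n + 1) ^ m * r ^ n" for n
    by (simp add: power_mult_distrib s(3)[symmetric] power_mult[symmetric] mult.commute)
  moreover have "0 ^ m = (0::real)" using False by simp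
  ultimately show ?thesis by simp
qed


definition dz :: "nat set \<Rightarrow> bool" where
  "dz A \<longleftrightarrow> (\<lambda>N. real (card (A \<inter> {1..N})) / real N) \<longlonglongrightarrow> 0"

lemma dz_subset:
  assumes "A \<subseteq> B" "dz B" shows "dz A"
  unfolding dz_def
proof (rule tendsto_sandwich[of "\<lambda>_. 0" _ _ "\<lambda>N. real (card (B \<inter> {1..N})) / real N"])
  show "\<forall>\<^sub>F n in sequentially. 0 \<le> real (card (A \<inter> {1..n})) / real n" by simp
  show "\<forall>\<^sub>F n in sequentially. real (card (A \<inter> {1..n})) / real n \<le> real (card (B \<inter> {1..n})) / real n"
    using assms(1) by (intro always_eventually allI divide_right_mono) (auto intro!: card_mono)
qed (use assms(2) in \<open>auto simp: dz_def\<close>)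

lemma dz_Un:
  assumes "dz A" "dz B" shows "dz (A \<union> B)"
  unfolding dz_def
proof (rule tendsto_sandwich[of "\<lambda>_. 0" _ _ "\<lambda>N. real (card (A \<inter> {1..N})) / real N + real (card (B \<inter> {1..N})) / real N"])
  show "\<forall>\<^sub>F n in sequentially. 0 \<le> real (card ((A \<union> B) \<inter> {1..n})) / real n" by simp
  show "\<forall>\<^sub>F n in sequentially. real (card ((A \<union> B) \<inter> {1..n})) / real n \<le>
      real (card (A \<inter> {1..n})) / real n + real (card (B \<inter> {1..n})) / real n"
  proof (intro always_eventually allI)
    fix n
    have "card ((A \<union> B) \<inter> {1..n}) \<le> card (A \<inter> {1..n}) + card (B \<inter> {1..n})"
      by (metis Int_Un_distrib2 card_Un_le)
    then have "real (card ((A \<union> B) \<inter> {1..n})) \<le> real (card (A \<inter> {1..n})) + real (card (B \<inter> {1..n}))"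
      by linarith
    then show "real (card ((A \<union> B) \<inter> {1..n})) / real n \<le>
      real (card (A \<inter> {1..n})) / real n + real (card (B \<inter> {1..n})) / real n"
      by (simp add: add_divide_distrib[symmetric] divide_right_mono)
  qed
  show "(\<lambda>N. real (card (A \<inter> {1..N})) / real N + real (card (B \<inter> {1..N})) / real N) \<longlonglongrightarrow> 0"
    using tendsto_add[OF assms[unfolded dz_def]] by simp
qed simp

lemma dz_empty: "dz {}" unfolding dz_def by simp

lemma dz_UN:
  assumes "finite I" "\<And>i. i \<in> I \<Longrightarrow> dz (A i)"
  shows "dz (\<Union>i\<in>I. A i)"
  using assms by (induction I rule: finite_induct) (auto simp: dz_empty intro: dz_Un)

lemma density_one_of_dz:
  assumes "dz (- J)" shows "cesaro_density_one J"
proof -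
  have "(\<lambda>N. 1 - real (card (- J \<inter> {1..N})) / real N) \<longlonglongrightarrow> 1 - 0"
    using assms unfolding dz_def by (intro tendsto_diff tendsto_const)
  moreover have "\<forall>\<^sub>F N in sequentially. 1 - real (card (- J \<inter> {1..N})) / real N = real (card (J \<inter> {1..N})) / real N"
  proof (rule eventually_sequentiallyI[of 1])
    fix N :: nat assume N: "N \<ge> 1"
    have "card (J \<inter> {1..N}) + card (- J \<inter> {1..N}) = card {1..N}"
    proof -
      have "J \<inter> {1..N} \<union> - J \<inter> {1..N} = {1..N}" by auto
      then show ?thesis by (subst card_Un_disjoint[symmetric]) auto
    qed
    then have "real (card (J \<inter> {1..N})) + real (card (- J \<inter> {1..N})) = real N" by simp
    then show "1 - real (card (- J \<inter> {1..N})) / real N = real (card (J \<inter> {1..N})) / real N"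
      using N by (simp add: field_simps)
  qed
  ultimately show ?thesis unfolding cesaro_density_one_def by (simp add: tendsto_cong)
qed

lemma bad_dz:
  assumes Q: "Q \<ge> 2"
  shows "dz {j. gb Q j < M}"
proof (cases "M = 0")
  case True then show ?thesis by (simp add: dz_empty)
next
  case False
  define m where "m = M - 1"
  have bad: "{j. gb Q j < M} = {j. gb Q j \<le> m}" using False unfolding m_def by auto
  define r where "r = real (Q - 1) / real Q"
  have r: "0 < r" "r < 1" using Q unfolding r_def by auto
  have g: "(\<lambda>n. real (n + 1) ^ m * r ^ n) \<longlonglongrightarrow> 0" by (rule poly_geom_tendsto[OF r])
  show ?thesis unfolding dz_def bad
  proof (rule LIMSEQ_I)
    fix \<epsilon> :: real assume \<epsilon>: "\<epsilon> > 0"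
    have "\<epsilon> / real Q > 0" using \<epsilon> Q by simp
    from LIMSEQ_D[OF g this] obtain B0 where B0: "\<And>n. n \<ge> B0 \<Longrightarrow> norm (real (n + 1) ^ m * r ^ n - 0) < \<epsilon> / real Q"
      by blast
    show "\<exists>no. \<forall>N\<ge>no. norm (real (card ({j. gb Q j \<le> m} \<inter> {1..N})) / real N - 0) < \<epsilon>"
    proof (intro exI allI impI)
      fix N assume N: "N \<ge> max 1 (Q ^ B0)"
      define B where "B = (LEAST B. N < Q ^ B)"
      have "N < 2 ^ N" by (rule less_exp)
      moreover have "(2::nat) ^ N \<le> Q ^ N" using Q by (intro power_mono) auto
      ultimately have ex: "N < Q ^ N" by linarith
      have NB: "N < Q ^ B" unfolding B_def by (rule LeastI[of "\<lambda>B. N < Q ^ B", OF ex])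
      have B1: "B \<ge> 1" using NB N by (cases B) auto
      have NB': "Q ^ (B - 1) \<le> N"
        using not_less_Least[of "B - 1" "\<lambda>B. N < Q ^ B"] B1 unfolding B_def[symmetric] by simp
      have BB0: "B \<ge> B0"
      proof (rule ccontr)
        assume "\<not> B \<ge> B0"
        then have "Q ^ B \<le> Q ^ B0" using Q by (intro power_increasing) auto
        then show False using NB N by simp
      qed
      have "card ({j. gb Q j \<le> m} \<inter> {1..N}) \<le> cnt Q B m"
        unfolding cnt_def using NB by (intro card_mono) auto
      also have "\<dots> \<le> (B + 1) ^ m * (Q - 1) ^ B" by (rule cnt_bound[OF Q])
      finally have "real (card ({j. gb Q j \<le> m} \<inter> {1..N})) \<le> real ((B + 1) ^ m * (Q - 1) ^ B)"
        by (simp only: of_nat_le_iff)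
      then have c: "real (card ({j. gb Q j \<le> m} \<inter> {1..N})) \<le> real (B + 1) ^ m * real (Q - 1) ^ B"
        by (simp only: of_nat_mult of_nat_power)
      have QB: "real Q ^ B = real Q * real Q ^ (B - 1)" using B1 by (cases B) auto
      have Npos: "real N > 0" using N by simp
      have "real (card ({j. gb Q j \<le> m} \<inter> {1..N})) / real N \<le> real (B + 1) ^ m * real (Q - 1) ^ B / real N"
        using c Npos by (intro divide_right_mono) auto
      also have "\<dots> \<le> real (B + 1) ^ m * real (Q - 1) ^ B / real Q ^ (B - 1)"
      proof (rule divide_left_mono)
        show "real Q ^ (B - 1) \<le> real N" using NB' by (metis of_nat_le_iff of_nat_power)
        show "0 < real N * real Q ^ (B - 1)" using Npos Q by simp
      qed simp
      also have "\<dots> = real Q * (real (B + 1) ^ m * r ^ B)"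
        using Q unfolding r_def power_divide QB by (simp add: field_simps)
      also have "\<dots> < real Q * (\<epsilon> / real Q)"
        using B0[OF BB0] Q r by (intro mult_strict_left_mono) auto
      also have "\<dots> = \<epsilon>" using Q by simp
      finally show "norm (real (card ({j. gb Q j \<le> m} \<inter> {1..N})) / real N - 0) < \<epsilon>" by simp
    qed
  qed
qed


lemma diagonal:
  fixes T :: "nat \<Rightarrow> nat set"
  assumes dzT: "\<And>n. dz (- T n)" and dec: "\<And>n. T (Suc n) \<subseteq> T n"
  shows "\<exists>J. dz (- J) \<and> (\<forall>n. finite (J - T n))"
proof -
  let ?rat = "\<lambda>n N. real (card (- T n \<inter> {1..N})) / real N"
  have "\<forall>n. \<exists>N0. \<forall>N\<ge>N0. ?rat n N < 1 / real (Suc n)"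
  proof
    fix n
    have "(1::real) / real (Suc n) > 0" by simp
    from LIMSEQ_D[OF dzT[of n, unfolded dz_def] this] show "\<exists>N0. \<forall>N\<ge>N0. ?rat n N < 1 / real (Suc n)"
      by auto
  qed
  then obtain Nf where Nf: "\<And>n N. N \<ge> Nf n \<Longrightarrow> ?rat n N < 1 / real (Suc n)" by metis
  define M where "M n = (\<Sum>i\<le>n. Nf i) + n" for n
  have MNf: "Nf n \<le> M n" for n
  proof -
    have "Nf n \<le> (\<Sum>i\<le>n. Nf i)" by (rule member_le_sum) auto
    then show ?thesis unfolding M_def by linarith
  qed
  have Mn: "n \<le> M n" for n unfolding M_def by simp
  have Tanti: "n \<le> n' \<Longrightarrow> T n' \<subseteq> T n" for n n'
    using lift_Suc_antimono_le[of T, OF dec] by blast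
  define J where "J = {j. \<forall>n. M n \<le> j \<longrightarrow> j \<in> T n}"
  have fin: "finite (J - T n)" for n
  proof (rule finite_subset[of _ "{..<M n}"])
    show "J - T n \<subseteq> {..<M n}" unfolding J_def by (auto simp: not_le)
  qed simp
  have "dz (- J)" unfolding dz_def
  proof (rule LIMSEQ_I)
    fix \<epsilon> :: real assume \<epsilon>: "\<epsilon> > 0"
    obtain n1 :: nat where n1: "n1 > 0" "inverse (real n1) < \<epsilon>" using ex_inverse_of_nat_less[OF \<epsilon>] by blast
    define n0 where "n0 = n1 - 1"
    have n0: "inverse (real (Suc n0)) < \<epsilon>" using n1 unfolding n0_def by simp
    show "\<exists>no. \<forall>N\<ge>no. norm (real (card (- J \<inter> {1..N})) / real N - 0) < \<epsilon>"
    proof (intro exI allI impI)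
      fix N assume N: "N \<ge> M n0"
      define S where "S = {n. M n \<le> N}"
      have "S \<subseteq> {..N}"
      proof
        fix n assume "n \<in> S"
        then have "M n \<le> N" by (simp add: S_def)
        then show "n \<in> {..N}" using Mn[of n] by simp
      qed
      then have finS: "finite S" using finite_subset by blast
      have n0S: "n0 \<in> S" using N unfolding S_def by simp
      define ns where "ns = Max S"
      have nsS: "ns \<in> S" unfolding ns_def using finS n0S by (intro Max_in) auto
      have le_ns: "n \<le> ns" if "M n \<le> N" for n unfolding ns_def using finS that by (simp add: S_def)
      have n0ns: "n0 \<le> ns" using le_ns N by simp
      have sub: "- J \<inter> {1..N} \<subseteq> - T ns \<inter> {1..N}"
      proof
        fix j assume j: "j \<in> - J \<inter> {1..N}"
        then obtain n where n: "M n \<le> j" "j \<notin> T n" unfolding J_def by auto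
        have "n \<le> ns" using n j by (intro le_ns) auto
        then have "j \<notin> T ns" using Tanti n by blast
        then show "j \<in> - T ns \<inter> {1..N}" using j by auto
      qed
      have "real (card (- J \<inter> {1..N})) / real N \<le> ?rat ns N"
        using sub by (intro divide_right_mono) (auto intro!: card_mono)
      also have "\<dots> < 1 / real (Suc ns)"
      proof (rule Nf)
        have "M ns \<le> N" using nsS by (simp add: S_def)
        then show "Nf ns \<le> N" using MNf[of ns] by linarith
      qed
      also have "\<dots> \<le> inverse (real (Suc n0))"
        using n0ns by (simp add: inverse_eq_divide frac_le)
      also have "\<dots> < \<epsilon>" by (rule n0)
      finally show "norm (real (card (- J \<inter> {1..N})) / real N - 0) < \<epsilon>" by simp
    qed
  qed
  then show ?thesis using fin by blast
qed

lemma good_J: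
  assumes p: "prime p"
  shows "\<exists>J. J \<subseteq> {1..} \<and> cesaro_density_one J \<and> (\<forall>e\<ge>1. \<forall>M. finite (J - {j. M \<le> gb (p ^ e) j}))"
proof -
  have p2: "p \<ge> 2" using p prime_ge_2_nat by blast
  have pe2: "p ^ e \<ge> 2" if "e \<ge> 1" for e
  proof -
    have "p ^ 1 \<le> p ^ e" using that p2 by (intro power_increasing) auto
    then show ?thesis using p2 by simp
  qed
  define T where "T n = {j. \<forall>e\<in>{1..Suc n}. n \<le> gb (p ^ e) j}" for n
  have dzT: "dz (- T n)" for n
  proof -
    have "- T n = (\<Union>e\<in>{1..Suc n}. {j. gb (p ^ e) j < n})" unfolding T_def
      by (simp add: not_le set_eq_iff)
    moreover have "dz (\<Union>e\<in>{1..Suc n}. {j. gb (p ^ e) j < n})"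
      by (intro dz_UN bad_dz pe2) auto
    ultimately show ?thesis by simp
  qed
  have dec: "T (Suc n) \<subseteq> T n" for n
  proof
    fix j assume j: "j \<in> T (Suc n)"
    show "j \<in> T n" unfolding T_def
    proof (intro CollectI ballI)
      fix e assume e: "e \<in> {1..Suc n}"
      then have "e \<in> {1..Suc (Suc n)}" by auto
      then have "Suc n \<le> gb (p ^ e) j" using j unfolding T_def by blast
      then show "n \<le> gb (p ^ e) j" by simp
    qed
  qed
  obtain J0 where J0: "dz (- J0)" "\<And>n. finite (J0 - T n)" using diagonal[of T, OF dzT dec] by blast
  define J where "J = J0 \<inter> {1..}"
  have "dz ({0} :: nat set)" unfolding dz_def by simp
  then have "dz (- J0 \<union> {0})" using J0(1) by (rule dz_Un[rotated])
  moreover have "- J = - J0 \<union> {0}" unfolding J_def by auto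
  ultimately have "cesaro_density_one J" by (intro density_one_of_dz) simp
  moreover have "finite (J - {j. M \<le> gb (p ^ e) j})" if "e \<ge> 1" for e M
  proof -
    let ?n = "max e M"
    have "T ?n \<subseteq> {j. M \<le> gb (p ^ e) j}"
    proof
      fix j assume "j \<in> T ?n"
      moreover have "e \<in> {1..Suc ?n}" using that by auto
      ultimately have "?n \<le> gb (p ^ e) j" unfolding T_def by blast
      then show "j \<in> {j. M \<le> gb (p ^ e) j}" by simp
    qed
    then have "J - {j. M \<le> gb (p ^ e) j} \<subseteq> J0 - T ?n" unfolding J_def by auto
    then show ?thesis using J0(2) finite_subset by blast
  qed
  moreover have "J \<subseteq> {1..}" unfolding J_def by blast
  ultimately show ?thesis by (intro exI[of _ J]) simp
qed


definition ep :: "nat \<Rightarrow> int \<Rightarrow> complex" where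
  "ep p x = cis (2 * pi * of_int x / real p)"

lemma ep_add: "ep p (x + y) = ep p x * ep p y"
  unfolding ep_def by (simp add: cis_mult add_divide_distrib distrib_left)

lemma ep_0[simp]: "ep p 0 = 1" unfolding ep_def by simp

lemma ep_mult_p: assumes "p > 0" shows "ep p (int p * q) = 1"
proof -
  have "2 * pi * of_int (int p * q) / real p = 2 * pi * of_int q" using assms by simp
  then show ?thesis unfolding ep_def by (simp add: cis_multiple_2pi)
qed

lemma ep_mod: assumes "p > 0" shows "ep p (x mod int p) = ep p x"
proof -
  have "ep p x = ep p (x mod int p + int p * (x div int p))" by simp
  also have "\<dots> = ep p (x mod int p)" using assms by (simp only: ep_add ep_mult_p) simp
  finally show ?thesis by simp
qed

lemma ep_cong: "p > 0 \<Longrightarrow> x mod int p = y mod int p \<Longrightarrow> ep p x = ep p y"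
  by (metis ep_mod)

lemma ep_sum: "finite S \<Longrightarrow> ep p (\<Sum>i\<in>S. g i) = (\<Prod>i\<in>S. ep p (g i))"
  by (induction S rule: finite_induct) (simp_all add: ep_add)

lemma character_ep:
  assumes "finite {n. k n \<noteq> 0}"
  shows "character p k a = ep p (int (\<Sum>n\<in>{n. k n \<noteq> 0}. k n * a n))"
proof -
  have "ep p (int (\<Sum>n\<in>{n. k n \<noteq> 0}. k n * a n)) = ep p (\<Sum>n\<in>{n. k n \<noteq> 0}. int (k n * a n))"
    by (simp only: of_nat_sum)
  also have "\<dots> = (\<Prod>n\<in>{n. k n \<noteq> 0}. ep p (int (k n * a n)))" by (rule ep_sum[OF assms])
  also have "\<dots> = character p k a" unfolding character_def ep_def
    by (intro prod.cong refl) (simp only: of_int_of_nat_eq)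
  finally show ?thesis by simp
qed

lemma character_cong:
  assumes "p > 0" "finite {n. k n \<noteq> 0}"
    and "(\<Sum>n\<in>{n. k n \<noteq> 0}. k n * a n) mod p = X mod p"
  shows "character p k a = ep p (int X)"
  unfolding character_ep[OF assms(2)] using assms(1)
proof (rule ep_cong)
  show "int (\<Sum>n\<in>{n. k n \<noteq> 0}. k n * a n) mod int p = int X mod int p"
    by (metis assms(3) of_nat_mod)
qed



definition adj :: "nat \<Rightarrow> ((int ^ 'd) \<Rightarrow> nat) \<Rightarrow> ((int ^ 'd) \<Rightarrow> nat) \<Rightarrow> ((int ^ 'd) \<Rightarrow> nat)" where
  "adj p f k = (\<lambda>m. (\<Sum>u\<in>{u. f u \<noteq> 0}. f u * k (m - u)) mod p)"

lemma adj_support: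
  "{m. adj p f k m \<noteq> 0} \<subseteq> (\<lambda>(n, u). n + u) ` ({n. k n \<noteq> 0} \<times> {u. f u \<noteq> 0})"
proof
  fix m assume m: "m \<in> {m. adj p f k m \<noteq> 0}"
  have "(\<Sum>u\<in>{u. f u \<noteq> 0}. f u * k (m - u)) \<noteq> 0"
  proof
    assume "(\<Sum>u\<in>{u. f u \<noteq> 0}. f u * k (m - u)) = 0"
    then have "adj p f k m = 0" unfolding adj_def by simp
    then show False using m by simp
  qed
  then obtain u where "u \<in> {u. f u \<noteq> 0}" "f u * k (m - u) \<noteq> 0" by (rule sum.not_neutral_contains_not_neutral)
  then have u: "f u \<noteq> 0" "k (m - u) \<noteq> 0" by auto
  then have "(m - u, u) \<in> {n. k n \<noteq> 0} \<times> {u. f u \<noteq> 0}" by simp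
  moreover have "m = (\<lambda>(n, u). n + u) (m - u, u)" by simp
  ultimately show "m \<in> (\<lambda>(n, u). n + u) ` ({n. k n \<noteq> 0} \<times> {u. f u \<noteq> 0})" by blast
qed

lemma adj_finite:
  assumes "finite {u. f u \<noteq> 0}" "finite {n. k n \<noteq> 0}"
  shows "finite {m. adj p f k m \<noteq> 0}"
  by (rule finite_subset[OF adj_support]) (use assms in simp)

lemma adj_less: "p > 0 \<Longrightarrow> adj p f k m < p"
  unfolding adj_def by simp

lemma char_lca:
  fixes f k :: "(int ^ 'd) \<Rightarrow> nat"
  assumes p: "p > 0" and fS: "finite {u. f u \<noteq> 0}" and kS: "finite {n. k n \<noteq> 0}"
  shows "character p k (lca p f a) = character p (adj p f k) a"
proof -
  let ?Sf = "{u. f u \<noteq> 0}" and ?Sk = "{n. k n \<noteq> 0}"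
  let ?T = "(\<lambda>(n, u). n + u) ` (?Sk \<times> ?Sf)"
  have finT: "finite ?T" using fS kS by simp
  define X where "X = (\<Sum>n\<in>?Sk. \<Sum>u\<in>?Sf. k n * f u * a (u + n))"
  have L: "character p k (lca p f a) = ep p (int X)"
  proof (rule character_cong[OF p kS])
    have "(\<Sum>n\<in>?Sk. k n * lca p f a n) mod p = (\<Sum>n\<in>?Sk. (k n * lca p f a n) mod p) mod p"
      by (simp add: mod_sum_eq)
    also have "\<dots> = (\<Sum>n\<in>?Sk. (k n * (\<Sum>u\<in>?Sf. f u * a (u + n))) mod p) mod p"
      unfolding lca_def by (simp add: mod_mult_right_eq)
    also have "\<dots> = (\<Sum>n\<in>?Sk. k n * (\<Sum>u\<in>?Sf. f u * a (u + n))) mod p"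
      by (simp add: mod_sum_eq)
    also have "(\<Sum>n\<in>?Sk. k n * (\<Sum>u\<in>?Sf. f u * a (u + n))) = X"
      unfolding X_def by (simp add: sum_distrib_left mult.assoc)
    finally show "(\<Sum>n\<in>?Sk. k n * lca p f a n) mod p = X mod p" .
  qed
  define Z where "Z m = (\<Sum>u\<in>?Sf. f u * k (m - u))" for m
  have adjZ: "adj p f k m = Z m mod p" for m unfolding adj_def Z_def ..
  have R: "character p (adj p f k) a = ep p (int (\<Sum>m\<in>?T. Z m * a m))"
  proof (rule character_cong[OF p adj_finite[OF fS kS]])
    have "(\<Sum>m\<in>{m. adj p f k m \<noteq> 0}. adj p f k m * a m) = (\<Sum>m\<in>?T. adj p f k m * a m)"
      using adj_support[of p f k] finT by (intro sum.mono_neutral_left) auto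
    then have "(\<Sum>m\<in>{m. adj p f k m \<noteq> 0}. adj p f k m * a m) mod p = (\<Sum>m\<in>?T. (adj p f k m * a m) mod p) mod p"
      by (simp add: mod_sum_eq)
    also have "\<dots> = (\<Sum>m\<in>?T. (Z m * a m) mod p) mod p"
      unfolding adjZ by (simp add: mod_mult_left_eq)
    also have "\<dots> = (\<Sum>m\<in>?T. Z m * a m) mod p"
      by (simp add: mod_sum_eq)
    finally show "(\<Sum>m\<in>{m. adj p f k m \<noteq> 0}. adj p f k m * a m) mod p = (\<Sum>m\<in>?T. Z m * a m) mod p" .
  qed
  have "(\<Sum>m\<in>?T. Z m * a m) = (\<Sum>m\<in>?T. \<Sum>u\<in>?Sf. f u * k (m - u) * a m)"
    unfolding Z_def by (simp add: sum_distrib_right)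
  also have "\<dots> = (\<Sum>u\<in>?Sf. \<Sum>m\<in>?T. f u * k (m - u) * a m)"
    by (rule sum.swap)
  also have "\<dots> = (\<Sum>u\<in>?Sf. \<Sum>n\<in>?Sk. k n * f u * a (u + n))"
  proof (rule sum.cong[OF refl])
    fix u assume u: "u \<in> ?Sf"
    have sub: "(\<lambda>n. n + u) ` ?Sk \<subseteq> ?T" using u by auto
    have "(\<Sum>m\<in>?T. f u * k (m - u) * a m) = (\<Sum>m\<in>(\<lambda>n. n + u) ` ?Sk. f u * k (m - u) * a m)"
    proof (rule sum.mono_neutral_right[OF finT sub])
      show "\<forall>m\<in>?T - (\<lambda>n. n + u) ` ?Sk. f u * k (m - u) * a m = 0"
      proof
        fix m assume m: "m \<in> ?T - (\<lambda>n. n + u) ` ?Sk"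
        have "k (m - u) = 0"
        proof (rule ccontr)
          assume "k (m - u) \<noteq> 0"
          then have "m \<in> (\<lambda>n. n + u) ` ?Sk" by (intro image_eqI[of _ _ "m - u"]) auto
          then show False using m by blast
        qed
        then show "f u * k (m - u) * a m = 0" by simp
      qed
    qed
    also have "\<dots> = (\<Sum>n\<in>?Sk. f u * k (n + u - u) * a (n + u))"
      by (rule sum.reindex[unfolded comp_def]) (auto simp: inj_on_def)
    also have "\<dots> = (\<Sum>n\<in>?Sk. k n * f u * a (u + n))"
      by (simp add: add.commute mult.commute mult.left_commute)
    finally show "(\<Sum>m\<in>?T. f u * k (m - u) * a m) = (\<Sum>n\<in>?Sk. k n * f u * a (u + n))" .
  qed
  also have "\<dots> = X" unfolding X_def by (rule sum.swap)
  finally show ?thesis using L R by simp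
qed


lemma adj_iter_finite:
  assumes "finite {u. f u \<noteq> 0}" "finite {n. k n \<noteq> 0}"
  shows "finite {n. (adj p f ^^ j) k n \<noteq> 0}"
proof (induction j)
  case 0 then show ?case using assms(2) by simp
next
  case (Suc j)
  show ?case by (simp only: funpow.simps comp_apply) (rule adj_finite[OF assms(1) Suc.IH])
qed

lemma char_iter:
  assumes p: "p > 0" and fS: "finite {u. f u \<noteq> 0}" and kS: "finite {n. k n \<noteq> 0}"
  shows "character p k ((lca p f ^^ j) a) = character p ((adj p f ^^ j) k) a"
proof (induction j arbitrary: a)
  case 0 then show ?case by simp
next
  case (Suc j)
  have "character p k ((lca p f ^^ Suc j) a) = character p k ((lca p f ^^ j) (lca p f a))"
    by (simp add: funpow_Suc_right del: funpow.simps)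
  also have "\<dots> = character p ((adj p f ^^ j) k) (lca p f a)" by (rule Suc)
  also have "\<dots> = character p (adj p f ((adj p f ^^ j) k)) a"
    by (rule char_lca[OF p fS adj_iter_finite[OF fS kS]])
  finally show ?case by simp
qed

definition poly :: "((int ^ 'd) \<Rightarrow> nat) \<Rightarrow> ((int ^ 'd) \<Rightarrow>\<^sub>0 int)" where
  "poly k = Abs_poly_mapping (\<lambda>n. int (k n))"

lemma lookup_poly: "finite {n. k n \<noteq> 0} \<Longrightarrow> lk (poly k) n = int (k n)"
  unfolding poly_def by (subst lookup_Abs_poly_mapping) auto

lemma keys_poly: "finite {n. k n \<noteq> 0} \<Longrightarrow> ks (poly k) = {n. k n \<noteq> 0}"
  by (auto simp: in_keys_iff lookup_poly)

lemma adj_poly: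
  assumes p: "p > 0" and fS: "finite {u. f u \<noteq> 0}" and kS: "finite {n. k n \<noteq> 0}"
    and kp: "\<forall>n. k n < p"
  shows "int ((adj p f ^^ j) k m) = lk (poly k * poly f ^ j) m mod int p"
proof (induction j arbitrary: m)
  case 0
  then show ?case using kp lookup_poly[OF kS] by simp
next
  case (Suc j)
  let ?X = "poly k * poly f ^ j"
  have "int ((adj p f ^^ Suc j) k m) = int ((\<Sum>u\<in>{u. f u \<noteq> 0}. f u * (adj p f ^^ j) k (m - u)) mod p)"
    by (simp add: adj_def)
  also have "\<dots> = (\<Sum>u\<in>{u. f u \<noteq> 0}. int (f u) * int ((adj p f ^^ j) k (m - u))) mod int p"
    by (simp add: of_nat_mod)
  also have "\<dots> = (\<Sum>u\<in>{u. f u \<noteq> 0}. int (f u) * (lk ?X (m - u) mod int p)) mod int p"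
    by (simp only: Suc)
  also have "\<dots> = (\<Sum>u\<in>{u. f u \<noteq> 0}. (int (f u) * (lk ?X (m - u) mod int p)) mod int p) mod int p"
    by (simp add: mod_sum_eq)
  also have "\<dots> = (\<Sum>u\<in>{u. f u \<noteq> 0}. (int (f u) * lk ?X (m - u)) mod int p) mod int p"
    by (simp add: mod_mult_right_eq)
  also have "\<dots> = (\<Sum>u\<in>{u. f u \<noteq> 0}. int (f u) * lk ?X (m - u)) mod int p"
    by (simp add: mod_sum_eq)
  also have "(\<Sum>u\<in>{u. f u \<noteq> 0}. int (f u) * lk ?X (m - u)) = lk (poly f * ?X) m"
    by (simp add: lookup_mult_conv keys_poly[OF fS] lookup_poly[OF fS])
  also have "poly f * ?X = poly k * poly f ^ Suc j" by (simp add: mult_ac)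
  finally show ?case .
qed

lemma rank_Sp:
  assumes p: "p > 0" and fS: "finite {u. f u \<noteq> 0}" and kS: "finite {n. k n \<noteq> 0}"
    and kp: "\<forall>n. k n < p"
  shows "char_rank ((adj p f ^^ j) k) = card (Sp p (poly k * poly f ^ j))"
proof -
  have "{m. (adj p f ^^ j) k m \<noteq> 0} = Sp p (poly k * poly f ^ j)"
  proof (rule set_eqI)
    fix m
    have "(adj p f ^^ j) k m \<noteq> 0 \<longleftrightarrow> int ((adj p f ^^ j) k m) \<noteq> 0" by simp
    also have "\<dots> \<longleftrightarrow> lk (poly k * poly f ^ j) m mod int p \<noteq> 0" by (simp only: adj_poly[OF assms])
    also have "\<dots> \<longleftrightarrow> \<not> int p dvd lk (poly k * poly f ^ j) m" by (simp add: dvd_eq_mod_eq_0)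
    finally show "m \<in> {m. (adj p f ^^ j) k m \<noteq> 0} \<longleftrightarrow> m \<in> Sp p (poly k * poly f ^ j)"
      by (simp add: Sp_def)
  qed
  then show ?thesis unfolding char_rank_def by simp
qed

section \<open>Projection to one dimension\<close>

lemma digits_zero:
  fixes w :: "nat \<Rightarrow> int"
  assumes B: "B > 0"
  shows "\<forall>i<n. \<bar>w i\<bar> < B \<Longrightarrow> (\<Sum>i<n. w i * B ^ i) = 0 \<Longrightarrow> \<forall>i<n. w i = 0"
proof (induction n arbitrary: w)
  case 0 then show ?case by simp
next
  case (Suc n)
  define R where "R = (\<Sum>i<n. w (Suc i) * B ^ i)"
  have "(\<Sum>i<Suc n. w i * B ^ i) = w 0 * B ^ 0 + (\<Sum>i<n. w (Suc i) * B ^ (Suc i))"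
    by (rule sum.lessThan_Suc_shift)
  also have "(\<Sum>i<n. w (Suc i) * B ^ (Suc i)) = B * R"
    unfolding R_def sum_distrib_left by (intro sum.cong refl) (simp only: power_Suc mult.left_commute)
  finally have "(\<Sum>i<Suc n. w i * B ^ i) = w 0 + B * R" by simp
  then have eq: "w 0 = - (B * R)" using Suc.prems(2) by simp
  have wb: "\<bar>w 0\<bar> < B" using Suc.prems(1) by simp
  have w0: "w 0 = 0"
  proof (rule ccontr)
    assume nz: "w 0 \<noteq> 0"
    have "B dvd w 0" using eq by simp
    then have "\<bar>B\<bar> \<le> \<bar>w 0\<bar>" using nz by (rule dvd_imp_le_int[rotated])
    then show False using wb B by simp
  qed
  then have "B * R = 0" using eq by simp
  then have R0: "R = 0" using B by simp
  have bnd: "\<forall>i<n. \<bar>w (Suc i)\<bar> < B" using Suc.prems(1) by simp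
  have "\<forall>i<n. w (Suc i) = 0" using Suc.IH[of "\<lambda>i. w (Suc i)", OF bnd] R0 unfolding R_def by blast
  show ?case
  proof (intro allI impI)
    fix i assume "i < Suc n"
    then show "w i = 0" using w0 \<open>\<forall>i<n. w (Suc i) = 0\<close> by (cases i) simp_all
  qed
qed

lemma exists_psi:
  fixes T0 :: "(int ^ 'd) set"
  assumes "finite T0"
  shows "\<exists>\<psi> :: (int ^ 'd) \<Rightarrow> int. (\<forall>x y. \<psi> (x + y) = \<psi> x + \<psi> y) \<and> \<psi> 0 = 0 \<and> inj_on \<psi> T0"
proof -
  obtain h where h: "bij_betw h {0..<card (UNIV :: 'd set)} (UNIV :: 'd set)"
    using ex_bij_betw_nat_finite[of "UNIV :: 'd set"] by auto
  let ?n = "card (UNIV :: 'd set)"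
  define bnd where "bnd = (\<Sum>u\<in>T0. \<Sum>i\<in>(UNIV :: 'd set). \<bar>u $ i\<bar>)"
  define B where "B = 2 * bnd + 1"
  have comp: "\<bar>u $ i\<bar> \<le> bnd" if "u \<in> T0" for u i
  proof -
    have "\<bar>u $ i\<bar> \<le> (\<Sum>i\<in>(UNIV :: 'd set). \<bar>u $ i\<bar>)" by (rule member_le_sum) auto
    also have "\<dots> \<le> bnd" unfolding bnd_def using that assms
      by (intro member_le_sum[where f="\<lambda>u. \<Sum>i\<in>(UNIV :: 'd set). \<bar>u $ i\<bar>"]) (auto intro: sum_nonneg)
    finally show ?thesis .
  qed
  have bnd0: "bnd \<ge> 0" unfolding bnd_def by (intro sum_nonneg) auto
  have B0: "B > 0" unfolding B_def using bnd0 by simp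
  define \<psi> where "\<psi> u = (\<Sum>i<?n. u $ h i * B ^ i)" for u :: "int ^ 'd"
  have add: "\<psi> (x + y) = \<psi> x + \<psi> y" for x y
    unfolding \<psi>_def by (simp add: sum.distrib distrib_right)
  have zero: "\<psi> 0 = 0" unfolding \<psi>_def by simp
  have inj: "inj_on \<psi> T0"
  proof (rule inj_onI)
    fix u v assume u: "u \<in> T0" and v: "v \<in> T0" and e: "\<psi> u = \<psi> v"
    have "(\<Sum>i<?n. (u $ h i - v $ h i) * B ^ i) = 0"
      using e unfolding \<psi>_def by (simp add: left_diff_distrib sum_subtractf)
    moreover have "\<forall>i<?n. \<bar>u $ h i - v $ h i\<bar> < B"
    proof (intro allI impI)
      fix i
      have "\<bar>u $ h i - v $ h i\<bar> \<le> \<bar>u $ h i\<bar> + \<bar>v $ h i\<bar>" by simp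
      also have "\<dots> \<le> 2 * bnd" using comp[OF u, of "h i"] comp[OF v, of "h i"] by simp
      finally show "\<bar>u $ h i - v $ h i\<bar> < B" unfolding B_def by simp
    qed
    ultimately have z: "\<forall>i<?n. u $ h i - v $ h i = 0" by (rule digits_zero[OF B0, rotated])
    show "u = v"
    unfolding vec_eq_iff
    proof
      fix j :: 'd
      have "j \<in> h ` {0..<?n}" using h unfolding bij_betw_def by simp
      then obtain i where "i \<in> {0..<?n}" "j = h i" by blast
      then show "u $ j = v $ j" using z by simp
    qed
  qed
  show ?thesis using add zero inj by blast
qed


lemma Sp_push_subset: "Sp p (pushf \<psi> X) \<subseteq> \<psi> ` Sp p X"
proof
  fix n assume n: "n \<in> Sp p (pushf \<psi> X)"
  show "n \<in> \<psi> ` Sp p X"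
  proof (rule ccontr)
    assume nn: "n \<notin> \<psi> ` Sp p X"
    have "int p dvd (\<Sum>u\<in>{u\<in>ks X. \<psi> u = n}. lk X u)"
    proof (rule dvd_sum)
      fix u assume "u \<in> {u\<in>ks X. \<psi> u = n}"
      then have "u \<notin> Sp p X" using nn by auto
      then show "int p dvd lk X u" unfolding Sp_def by simp
    qed
    then show False using n unfolding Sp_def lookup_push by simp
  qed
qed

lemma card_Sp_push: "card (Sp p (pushf \<psi> X)) \<le> card (Sp p X)"
proof -
  have "card (Sp p (pushf \<psi> X)) \<le> card (\<psi> ` Sp p X)"
    by (rule card_mono[OF _ Sp_push_subset]) simp
  also have "\<dots> \<le> card (Sp p X)" by (rule card_image_le[OF finite_Sp])
  finally show ?thesis .
qed

lemma push_poly_at: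
  assumes "finite {n. g n \<noteq> 0}" "inj_on \<psi> S" "{n. g n \<noteq> 0} \<subseteq> S" "u \<in> {n. g n \<noteq> 0}"
  shows "lk (pushf \<psi> (poly g)) (\<psi> u) = int (g u)"
proof -
  have "{v \<in> ks (poly g). \<psi> v = \<psi> u} = {u}"
    using assms by (auto simp: keys_poly inj_on_def subset_iff)
  then show ?thesis by (simp add: lookup_push lookup_poly[OF assms(1)])
qed

lemma rank_growth:
  fixes f k :: "(int ^ 'd) \<Rightarrow> nat"
  assumes p: "prime p" and fc: "lca_coeffs p f" and nt: "nontrivial_lca f"
    and kc: "char_index p k" and kne: "{n. k n \<noteq> 0} \<noteq> {}"
  shows "\<exists>e\<ge>1. \<forall>j. 2 ^ (gb (p ^ e) j) \<le> char_rank ((adj p f ^^ j) k)"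
proof -
  have p0: "p > 0" using p prime_gt_0_nat by blast
  have p2: "p \<ge> 2" using p prime_ge_2_nat by blast
  have fS: "finite {u. f u \<noteq> 0}" and fp: "\<forall>u. f u < p" using fc unfolding lca_coeffs_def by auto
  have kS: "finite {n. k n \<noteq> 0}" and kp: "\<forall>n. k n < p" using kc unfolding char_index_def by auto
  have f2: "card {u. f u \<noteq> 0} \<ge> 2" using nt unfolding nontrivial_lca_def by simp
  obtain \<psi> :: "(int ^ 'd) \<Rightarrow> int" where add: "\<And>x y. \<psi> (x + y) = \<psi> x + \<psi> y" and z: "\<psi> 0 = 0"
    and inj: "inj_on \<psi> ({u. f u \<noteq> 0} \<union> {n. k n \<noteq> 0})"
    using exists_psi[of "{u. f u \<noteq> 0} \<union> {n. k n \<noteq> 0}"] fS kS by auto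
  define A where "A = pushf \<psi> (poly k)"
  define H where "H = pushf \<psi> (poly f)"
  have notdvd: "\<not> int p dvd int x" if "0 < x" "x < p" for x
  proof
    assume "int p dvd int x"
    then have "p dvd x" by simp
    then have "p \<le> x" using that(1) by (rule dvd_imp_le)
    then show False using that(2) by simp
  qed
  have sH: "\<psi> ` {u. f u \<noteq> 0} \<subseteq> Sp p H"
  proof
    fix n assume "n \<in> \<psi> ` {u. f u \<noteq> 0}"
    then obtain u where u: "f u \<noteq> 0" "n = \<psi> u" by auto
    have "lk H n = int (f u)" unfolding H_def u(2)
      by (rule push_poly_at[OF fS inj]) (use u in auto)
    then show "n \<in> Sp p H" unfolding Sp_def using notdvd[of "f u"] u fp by simp
  qed
  have injf: "inj_on \<psi> {u. f u \<noteq> 0}" using inj by (rule inj_on_subset) auto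
  have H2: "card (Sp p H) \<ge> 2"
  proof -
    have "card (\<psi> ` {u. f u \<noteq> 0}) = card {u. f u \<noteq> 0}" by (rule card_image[OF injf])
    moreover have "card (\<psi> ` {u. f u \<noteq> 0}) \<le> card (Sp p H)" by (rule card_mono[OF finite_Sp sH])
    ultimately show ?thesis using f2 by simp
  qed
  obtain n0 where n0: "k n0 \<noteq> 0" using kne by auto
  have SA: "Sp p A \<noteq> {}"
  proof -
    have "lk A (\<psi> n0) = int (k n0)" unfolding A_def
      by (rule push_poly_at[OF kS inj]) (use n0 in auto)
    then have "\<psi> n0 \<in> Sp p A" unfolding Sp_def using notdvd[of "k n0"] n0 kp by simp
    then show ?thesis by blast
  qed
  have SH: "Sp p H \<noteq> {}" using H2 by auto
  define K where "K = max (wd p H) (wd p A)"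
  have wH0: "wd p H \<ge> 0" by (rule wd_nonneg[OF SH])
  define e where "e = nat (K + wd p H) + 1"
  have e1: "e \<ge> 1" unfolding e_def by simp
  have "int e \<le> int (2 ^ e)" by (simp add: less_imp_le)
  also have "\<dots> \<le> int (p ^ e)" using p2 by (simp add: power_mono)
  finally have eK: "K + wd p H < int (p ^ e)" unfolding e_def using wH0 K_def by linarith
  have gr: "2 ^ gb (p ^ e) j \<le> card (Sp p (A * H ^ j))" for j
    by (rule growth[OF p refl e1 H2 _ eK SA]) (auto simp: K_def)
  have "A * H ^ j = pushf \<psi> (poly k * poly f ^ j)" for j
    unfolding A_def H_def using add z by (simp add: pushf_mult pushf_power)
  then have "card (Sp p (A * H ^ j)) \<le> char_rank ((adj p f ^^ j) k)" for j
    unfolding rank_Sp[OF p0 fS kS kp] by (simp only: card_Sp_push)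
  then have "2 ^ gb (p ^ e) j \<le> char_rank ((adj p f ^^ j) k)" for j
    using gr[of j] by (rule order_trans[rotated])
  then show ?thesis using e1 by blast
qed


lemma space_cfg: "space (cfg_space p) = {a. \<forall>n. a n < p}"
  unfolding cfg_space_def space_PiM PiE_UNIV_domain by auto

definition cyl :: "nat \<Rightarrow> (int ^ 'd) set \<Rightarrow> ((int ^ 'd) \<Rightarrow> nat) \<Rightarrow> ((int ^ 'd) \<Rightarrow> nat) set" where
  "cyl p W c = {a \<in> space (cfg_space p). \<forall>n\<in>W. a n = c n}"

lemma cyl_prod_emb:
  assumes "\<And>i. space (M i) = {..<p}"
  shows "cyl p W c = prod_emb UNIV M W (PiE W (\<lambda>n. {c n} \<inter> {..<p}))"
proof -
  have "x \<in> cyl p W c \<longleftrightarrow> x \<in> prod_emb UNIV M W (PiE W (\<lambda>n. {c n} \<inter> {..<p}))" for x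
    unfolding cyl_def prod_emb_iff space_cfg using assms by (auto simp: PiE_iff)
  then show ?thesis by blast
qed

lemma cyl_sets:
  assumes "finite W"
  shows "cyl p W c \<in> sets (cfg_space p)"
proof -
  have "cyl p W c = prod_emb UNIV (\<lambda>_. count_space {..<p}) W (PiE W (\<lambda>n. {c n} \<inter> {..<p}))"
    by (rule cyl_prod_emb) simp
  also have "\<dots> \<in> sets (PiM UNIV (\<lambda>_. count_space {..<p}))"
    using assms by (intro sets_PiM_I) auto
  finally show ?thesis unfolding cfg_space_def by (simp add: atLeast0LessThan)
qed

lemma measurable_fin_dep:
  fixes g :: "((int ^ 'd) \<Rightarrow> nat) \<Rightarrow> 'b" and W :: "(int ^ 'd) set"
  assumes W: "finite W"
    and dep: "\<And>a b. a \<in> space (cfg_space p) \<Longrightarrow> b \<in> space (cfg_space p) \<Longrightarrow> (\<forall>n\<in>W. a n = b n) \<Longrightarrow> g a = g b"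
    and sp: "\<And>a. a \<in> space (cfg_space p) \<Longrightarrow> g a \<in> space N"
  shows "g \<in> measurable (cfg_space p) N"
proof (rule measurableI)
  fix a :: "(int ^ 'd) \<Rightarrow> nat" assume "a \<in> space (cfg_space p)" then show "g a \<in> space N" by (rule sp)
next
  fix A assume A: "A \<in> sets N"
  let ?X = "space (cfg_space p) :: ((int ^ 'd) \<Rightarrow> nat) set"
  define R where "R = (\<lambda>a. restrict a W) ` {a \<in> ?X. g a \<in> A}"
  have "R \<subseteq> PiE W (\<lambda>_. {..<p})" unfolding R_def space_cfg by auto
  then have finR: "finite R" using W by (rule finite_subset[OF _ finite_PiE]) auto
  have eq: "g -` A \<inter> ?X = (\<Union>t\<in>R. cyl p W t)"
  proof (intro equalityI subsetI)
    fix a assume a: "a \<in> g -` A \<inter> ?X"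
    then have "restrict a W \<in> R" unfolding R_def by auto
    moreover have "a \<in> cyl p W (restrict a W)" using a unfolding cyl_def by auto
    ultimately show "a \<in> (\<Union>t\<in>R. cyl p W t)" by blast
  next
    fix a assume "a \<in> (\<Union>t\<in>R. cyl p W t)"
    then obtain b where b: "b \<in> ?X" "g b \<in> A" and a: "a \<in> cyl p W (restrict b W)"
      unfolding R_def by auto
    have aX: "a \<in> ?X" using a unfolding cyl_def by simp
    have "\<forall>n\<in>W. a n = b n" using a unfolding cyl_def by auto
    then have "g a = g b" using dep[OF aX b(1)] by simp
    then show "a \<in> g -` A \<inter> ?X" using b aX by simp
  qed
  show "g -` A \<inter> ?X \<in> sets (cfg_space p)"
    unfolding eq using finR W by (intro sets.finite_UN cyl_sets) auto
qed

lemma sets_haar: "sets (haar p) = sets (cfg_space p)"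
  unfolding haar_def cfg_space_def by (intro sets_PiM_cong) (simp_all add: sets_uniform_count_measure_count_space)

lemma space_haar: "space (haar p) = space (cfg_space p)"
  by (rule sets_eq_imp_space_eq[OF sets_haar])

lemma prob_space_haar: "p > 0 \<Longrightarrow> prob_space (haar p)"
  unfolding haar_def by (intro prob_space_PiM prob_space_uniform_count_measure) auto

lemma measure_haar_cyl:
  assumes p: "p > 0" and W: "finite W" and c: "\<forall>n\<in>W. c n < p"
  shows "measure (haar p) (cyl p W c) = (1 / real p) ^ card W"
proof -
  let ?U = "uniform_count_measure {..<p}"
  have "cyl p W c = prod_emb UNIV (\<lambda>_. ?U) W (PiE W (\<lambda>n. {c n} \<inter> {..<p}))"
    by (rule cyl_prod_emb) (simp add: space_uniform_count_measure)
  also have "\<dots> = prod_emb UNIV (\<lambda>_. ?U) W (PiE W (\<lambda>n. {c n}))"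
    using c by (intro arg_cong[where f="prod_emb UNIV (\<lambda>_. ?U) W"] PiE_cong) auto
  finally have cy: "cyl p W c = prod_emb UNIV (\<lambda>_. ?U) W (PiE W (\<lambda>n. {c n}))" .
  have hp: "haar p = PiM UNIV (\<lambda>_. ?U)" unfolding haar_def by (simp add: atLeast0LessThan)
  have "emeasure (haar p) (cyl p W c) = (\<Prod>n\<in>W. emeasure ?U {c n})"
    unfolding cy hp using W c p
    by (intro emeasure_PiM_emb prob_space_uniform_count_measure) (auto simp: sets_uniform_count_measure)
  also have "\<dots> = (\<Prod>n\<in>W. ennreal (1 / real p))"
  proof (rule prod.cong[OF refl])
    fix n assume "n \<in> W"
    then have "emeasure ?U {c n} = ennreal (measure ?U {c n})"
      using p c by (intro finite_measure.emeasure_eq_measure prob_space.finite_measure prob_space_uniform_count_measure) auto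
    also have "measure ?U {c n} = 1 / real p" using c \<open>n \<in> W\<close> by (simp add: measure_uniform_count_measure)
    finally show "emeasure ?U {c n} = ennreal (1 / real p)" .
  qed
  also have "\<dots> = ennreal ((1 / real p) ^ card W)" by (simp add: ennreal_power)
  finally have "emeasure (haar p) (cyl p W c) = ennreal ((1 / real p) ^ card W)" .
  then show ?thesis by (simp add: measure_def)
qed


definition ext :: "(int ^ 'd) set \<Rightarrow> ((int ^ 'd) \<Rightarrow> nat) \<Rightarrow> ((int ^ 'd) \<Rightarrow> nat)" where
  "ext W t = (\<lambda>n. if n \<in> W then t n else 0)"

lemma ep_of_nat: "ep p (int x) = cis (2 * pi * real x / real p)"
  unfolding ep_def by simp

lemma char_ext:
  assumes W: "finite W"
  shows "character p (ext W t) b = (\<Prod>n\<in>W. ep p (int (t n * b n)))"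
proof -
  have sub: "{n. ext W t n \<noteq> 0} \<subseteq> W" unfolding ext_def by auto
  have "character p (ext W t) b = (\<Prod>n\<in>{n. ext W t n \<noteq> 0}. cis (2 * pi * real (ext W t n * b n) / real p))"
    unfolding character_def ..
  also have "\<dots> = (\<Prod>n\<in>W. cis (2 * pi * real (ext W t n * b n) / real p))"
    using W sub by (intro prod.mono_neutral_left) auto
  also have "\<dots> = (\<Prod>n\<in>W. ep p (int (t n * b n)))"
    by (intro prod.cong refl) (simp add: ext_def ep_of_nat del: of_nat_mult)
  finally show ?thesis .
qed

lemma ep_cnj_mult: "cnj (ep p x) * ep p y = ep p (y - x)"
  unfolding ep_def by (simp add: cis_cnj cis_mult diff_divide_distrib algebra_simps)

lemma ep_roots:
  assumes p: "p > 0"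
  shows "(\<Sum>s<p. ep p (int s * d)) = (if int p dvd d then of_nat p else 0)"
proof -
  let ?z = "ep p d"
  have pw: "ep p (int s * d) = ?z ^ s" for s
  proof -
    have "?z ^ s = cis (real s * (2 * pi * of_int d / real p))" unfolding ep_def by (rule Complex.DeMoivre)
    also have "real s * (2 * pi * of_int d / real p) = 2 * pi * of_int (int s * d) / real p"
      by (simp add: divide_inverse mult_ac)
    finally show ?thesis unfolding ep_def by simp
  qed
  show ?thesis
  proof (cases "int p dvd d")
    case True
    then obtain q where q: "d = int p * q" by blast
    have "?z = 1" unfolding q by (rule ep_mult_p[OF p])
    then show ?thesis using True by (simp add: pw)
  next
    case False
    have z1: "?z \<noteq> 1"
    proof
      assume "?z = 1"
      then have "cos (2 * pi * of_int d / real p) = 1" unfolding ep_def by (metis cis.sel(1) one_complex.sel(1))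
      then obtain n :: int where n: "2 * pi * of_int d / real p = of_int n * 2 * pi" using cos_one_2pi_int by blast
      then have "of_int d = real p * of_int n" using p by (simp add: field_simps)
      then have "d = int p * n" by (metis of_int_eq_iff of_int_mult of_int_of_nat_eq)
      then show False using False by simp
    qed
    have zp: "?z ^ p = 1" using pw[of p] ep_mult_p[OF p, of d] by simp
    have "(\<Sum>s<p. ep p (int s * d)) = (\<Sum>s<p. ?z ^ s)" by (simp add: pw)
    also have "\<dots> = (?z ^ p - 1) / (?z - 1)" by (rule geometric_sum[OF z1])
    also have "\<dots> = 0" using zp by simp
    finally show ?thesis using False by simp
  qed
qed

lemma dvd_diff_less_eq:
  assumes "int p dvd (int x - int y)" "x < p" "y < p"
  shows "x = y"
proof -
  have "int x mod int p = int y mod int p" using assms(1) by (simp add: mod_eq_dvd_iff)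
  then show ?thesis using assms(2,3) by simp
qed

lemma cyl_fourier:
  assumes p: "p > 0" and W: "finite W" and a: "a \<in> space (cfg_space p)" and c: "\<forall>n\<in>W. c n < p"
  shows "complex_of_real (indicator (cyl p W c) a) =
    (\<Sum>t\<in>PiE W (\<lambda>_. {..<p}). cnj (character p (ext W t) c) * character p (ext W t) a) / of_nat (p ^ card W)"
proof -
  have ap: "a n < p" for n using a unfolding space_cfg by simp
  have trm: "cnj (character p (ext W t) c) * character p (ext W t) a
      = (\<Prod>n\<in>W. ep p (int (t n) * (int (a n) - int (c n))))" for t
  proof -
    have "cnj (character p (ext W t) c) * character p (ext W t) a =
        (\<Prod>n\<in>W. cnj (ep p (int (t n * c n)))) * (\<Prod>n\<in>W. ep p (int (t n * a n)))"
      unfolding char_ext[OF W] by (simp add: cnj_prod)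
    also have "\<dots> = (\<Prod>n\<in>W. cnj (ep p (int (t n * c n))) * ep p (int (t n * a n)))"
      by (simp add: prod.distrib)
    also have "\<dots> = (\<Prod>n\<in>W. ep p (int (t n) * (int (a n) - int (c n))))"
      by (intro prod.cong refl) (simp add: ep_cnj_mult right_diff_distrib)
    finally show ?thesis .
  qed
  have "(\<Sum>t\<in>PiE W (\<lambda>_. {..<p}). cnj (character p (ext W t) c) * character p (ext W t) a)
      = (\<Sum>t\<in>PiE W (\<lambda>_. {..<p}). \<Prod>n\<in>W. ep p (int (t n) * (int (a n) - int (c n))))"
    by (simp only: trm)
  also have "\<dots> = (\<Prod>n\<in>W. \<Sum>s<p. ep p (int s * (int (a n) - int (c n))))"
    by (rule prod_sum_PiE[symmetric]) (use W in auto)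
  also have "\<dots> = (\<Prod>n\<in>W. if a n = c n then of_nat p else 0)"
  proof (intro prod.cong refl)
    fix n assume n: "n \<in> W"
    have "int p dvd (int (a n) - int (c n)) \<longleftrightarrow> a n = c n"
      using dvd_diff_less_eq[of p "a n" "c n"] ap[of n] c n by auto
    then show "(\<Sum>s<p. ep p (int s * (int (a n) - int (c n)))) = (if a n = c n then of_nat p else 0)"
      by (simp add: ep_roots[OF p])
  qed
  also have "\<dots> = (if \<forall>n\<in>W. a n = c n then of_nat (p ^ card W) else 0)"
  proof (cases "\<forall>n\<in>W. a n = c n")
    case True then show ?thesis by simp
  next
    case False
    then obtain n where "n \<in> W" "a n \<noteq> c n" by blast
    then show ?thesis using W False by (intro trans[OF prod_zero]) auto
  qed
  finally have S: "(\<Sum>t\<in>PiE W (\<lambda>_. {..<p}). cnj (character p (ext W t) c) * character p (ext W t) a)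
      = (if \<forall>n\<in>W. a n = c n then of_nat (p ^ card W) else 0)" .
  show ?thesis unfolding S using p a by (auto simp: cyl_def indicator_def)
qed


lemma lca_less: "p > 0 \<Longrightarrow> lca p f a n < p"
  unfolding lca_def by simp

lemma lca_measurable:
  fixes f :: "(int ^ 'd) \<Rightarrow> nat"
  assumes p: "p > 0" and fS: "finite {u. f u \<noteq> 0}"
  shows "lca p f \<in> measurable (cfg_space p) (cfg_space p)"
proof -
  have "(\<lambda>a n. lca p f a n) \<in> measurable (cfg_space p) (PiM UNIV (\<lambda>_. count_space {0..<p}))"
  proof (rule measurable_PiM_single')
    fix n :: "int ^ 'd"
    show "(\<lambda>a. lca p f a n) \<in> measurable (cfg_space p) (count_space {0..<p})"
    proof (rule measurable_fin_dep[where W="(\<lambda>u. u + n) ` {u. f u \<noteq> 0}"])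
      show "finite ((\<lambda>u. u + n) ` {u. f u \<noteq> 0})" using fS by simp
      fix a b :: "(int ^ 'd) \<Rightarrow> nat"
      assume "\<forall>m\<in>(\<lambda>u. u + n) ` {u. f u \<noteq> 0}. a m = b m"
      then show "lca p f a n = lca p f b n" unfolding lca_def by (intro arg_cong2[where f="(mod)"] sum.cong refl) auto
    next
      fix a :: "(int ^ 'd) \<Rightarrow> nat"
      show "lca p f a n \<in> space (count_space {0..<p})" using lca_less[OF p] by simp
    qed
  next
    show "(\<lambda>a n. lca p f a n) \<in> space (cfg_space p) \<rightarrow> (\<Pi>\<^sub>E n\<in>UNIV. space (count_space {0..<p}))"
      using lca_less[OF p] by auto
  qed
  then show ?thesis unfolding cfg_space_def by simp
qed

lemma lca_pow_measurable:
  assumes p: "p > 0" and fS: "finite {u. f u \<noteq> 0}"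
  shows "(lca p f ^^ j) \<in> measurable (cfg_space p) (cfg_space p)"
proof (induction j)
  case 0 then show ?case by simp
next
  case (Suc j)
  then show ?case using lca_measurable[OF p fS] by (simp add: measurable_comp)
qed

lemma norm_character: "norm (character p k a) = 1"
  unfolding character_def by (simp add: prod_norm[symmetric])

lemma character_measurable:
  fixes k :: "(int ^ 'd) \<Rightarrow> nat"
  assumes "finite {n. k n \<noteq> 0}"
  shows "character p k \<in> borel_measurable (cfg_space p)"
proof (rule measurable_fin_dep[where W="{n. k n \<noteq> 0}"])
  show "finite {n. k n \<noteq> 0}" by (rule assms)
  fix a b :: "(int ^ 'd) \<Rightarrow> nat" assume "\<forall>n\<in>{n. k n \<noteq> 0}. a n = b n"
  then show "character p k a = character p k b" unfolding character_def by (intro prod.cong refl) auto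
qed simp

lemma character_zero[simp]: "character p (\<lambda>_. 0) a = 1"
  unfolding character_def by simp

lemma adj_zero: "(adj p f ^^ j) (\<lambda>_. 0) = (\<lambda>_. 0)"
  by (induction j) (simp_all add: adj_def)

locale setting =
  fixes p :: nat and f :: "(int ^ 'd) \<Rightarrow> nat" and \<mu> :: "((int ^ 'd) \<Rightarrow> nat) measure" and J :: "nat set"
  assumes prime: "prime p"
    and fc: "lca_coeffs p f" and nt: "nontrivial_lca f"
    and ps: "prob_space \<mu>" and sets_mu: "sets \<mu> = sets (cfg_space p)"
    and hm: "harmonically_mixing p \<mu>"
    and PJ: "\<forall>e\<ge>1. \<forall>M. finite (J - {j. M \<le> gb (p ^ e) j})"
begin

abbreviation "FJ \<equiv> sequentially \<sqinter> principal J"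
abbreviation "\<nu> j \<equiv> distr \<mu> (cfg_space p) (lca p f ^^ j)"

lemma p0: "p > 0" using prime prime_gt_0_nat by blast
lemma fS: "finite {u. f u \<noteq> 0}" using fc unfolding lca_coeffs_def by simp

lemma space_mu: "space \<mu> = space (cfg_space p)" by (rule sets_eq_imp_space_eq[OF sets_mu])

lemma F_meas: "(lca p f ^^ j) \<in> measurable \<mu> (cfg_space p)"
  using lca_pow_measurable[OF p0 fS] measurable_cong_sets[OF sets_mu refl] by blast

lemma prob_nu: "prob_space (\<nu> j)"
  by (rule prob_space.prob_space_distr[OF ps F_meas])

lemma space_nu: "space (\<nu> j) = space (cfg_space p)" by simp
lemma sets_nu: "sets (\<nu> j) = sets (cfg_space p)" by simp

lemma eventually_FJ:
  assumes "\<exists>N. \<forall>j\<ge>N. j \<in> J \<longrightarrow> P j"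
  shows "eventually P FJ"
  using assms by (auto simp: eventually_inf_principal eventually_sequentially)

lemma rank_tendsto:
  assumes kc: "char_index p k" and kne: "{n. k n \<noteq> 0} \<noteq> {}"
  shows "eventually (\<lambda>j. R < char_rank ((adj p f ^^ j) k)) FJ"
proof -
  obtain e where e: "e \<ge> 1" "\<And>j. 2 ^ (gb (p ^ e) j) \<le> char_rank ((adj p f ^^ j) k)"
    using rank_growth[OF prime fc nt kc kne] by blast
  have fin: "finite (J - {j. Suc R \<le> gb (p ^ e) j})" using PJ e(1) by blast
  obtain N where N: "\<forall>j\<in>J - {j. Suc R \<le> gb (p ^ e) j}. j < N"
    using finite_nat_bounded[OF fin] by (auto simp: lessThan_iff subset_iff)
  show ?thesis
  proof (rule eventually_FJ, intro exI allI impI)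
    fix j assume j: "N \<le> j" "j \<in> J"
    have "Suc R \<le> gb (p ^ e) j"
    proof (rule ccontr)
      assume "\<not> Suc R \<le> gb (p ^ e) j"
      then have "j \<in> J - {j. Suc R \<le> gb (p ^ e) j}" using j by simp
      then have "j < N" using N by blast
      then show False using j by simp
    qed
    moreover have "gb (p ^ e) j < 2 ^ gb (p ^ e) j" by (rule less_exp)
    ultimately show "R < char_rank ((adj p f ^^ j) k)" using e(2)[of j] by linarith
  qed
qed

lemma char_index_iter:
  assumes kc: "char_index p k"
  shows "char_index p ((adj p f ^^ j) k)"
proof -
  have "finite {n. (adj p f ^^ j) k n \<noteq> 0}"
    using adj_iter_finite[OF fS] kc unfolding char_index_def by blast
  moreover have "(adj p f ^^ j) k n < p" for n
    using kc adj_less[OF p0] unfolding char_index_def by (cases j) auto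
  ultimately show ?thesis unfolding char_index_def by blast
qed

lemma mixing_tendsto:
  assumes kc: "char_index p k" and kne: "{n. k n \<noteq> 0} \<noteq> {}"
  shows "((\<lambda>j. integral\<^sup>L \<mu> (character p ((adj p f ^^ j) k))) \<longlongrightarrow> 0) FJ"
proof (rule tendstoI)
  fix \<epsilon> :: real assume \<epsilon>: "\<epsilon> > 0"
  obtain R where R: "\<And>k. char_index p k \<Longrightarrow> R < char_rank k \<Longrightarrow> cmod (integral\<^sup>L \<mu> (character p k)) < \<epsilon>"
    using hm \<epsilon> unfolding harmonically_mixing_def by blast
  show "eventually (\<lambda>j. dist (integral\<^sup>L \<mu> (character p ((adj p f ^^ j) k))) 0 < \<epsilon>) FJ"
    using rank_tendsto[OF kc kne, of R] by eventually_elim (simp add: R char_index_iter[OF kc])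
qed

end


context setting
begin

lemma integrable_char:
  assumes "finite {n. k n \<noteq> 0}"
  shows "integrable \<mu> (character p k)"
proof -
  interpret prob_space \<mu> by (rule ps)
  show ?thesis
  proof (rule integrable_const_bound[where B=1])
    show "AE x in \<mu>. norm (character p k x) \<le> 1" by (simp add: norm_character)
    show "character p k \<in> borel_measurable \<mu>"
      using character_measurable[OF assms, of p] measurable_cong_sets[OF sets_mu refl] by blast
  qed
qed

lemma cyl_nu_tendsto:
  assumes W: "finite W" and c: "\<forall>n\<in>W. c n < p"
  shows "((\<lambda>j. measure (\<nu> j) (cyl p W c)) \<longlongrightarrow> (1 / real p) ^ card W) FJ"
proof -
  let ?T = "PiE W (\<lambda>_. {..<p}) :: ((int ^ 'd) \<Rightarrow> nat) set"
  let ?t0 = "restrict (\<lambda>_. 0) W :: (int ^ 'd) \<Rightarrow> nat"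
  let ?chi = "\<lambda>t. character p (ext W t)"
  let ?I = "\<lambda>j t. integral\<^sup>L \<mu> (character p ((adj p f ^^ j) (ext W t)))"
  have finT: "finite ?T" using W by (simp add: finite_PiE)
  have extfin: "finite {n. ext W t n \<noteq> 0}" for t
    using W by (rule finite_subset[rotated]) (auto simp: ext_def)
  have eq: "complex_of_real (measure (\<nu> j) (cyl p W c)) =
      (\<Sum>t\<in>?T. cnj (?chi t c) * ?I j t) / of_nat (p ^ card W)" for j
  proof -
    have cs: "cyl p W c \<in> sets (cfg_space p)" by (rule cyl_sets[OF W])
    have "measure (\<nu> j) (cyl p W c) = integral\<^sup>L (\<nu> j) (indicator (cyl p W c))"
      using sets.sets_into_space[OF cs] by (simp add: Int_absorb2)
    also have "\<dots> = integral\<^sup>L \<mu> (\<lambda>x. indicator (cyl p W c) ((lca p f ^^ j) x))"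
      by (rule integral_distr[OF F_meas borel_measurable_indicator[OF cs]])
    finally have "complex_of_real (measure (\<nu> j) (cyl p W c)) =
        integral\<^sup>L \<mu> (\<lambda>x. complex_of_real (indicator (cyl p W c) ((lca p f ^^ j) x)))" by simp
    also have "\<dots> = integral\<^sup>L \<mu> (\<lambda>x. (\<Sum>t\<in>?T. cnj (?chi t c) * character p ((adj p f ^^ j) (ext W t)) x) / of_nat (p ^ card W))"
    proof (rule Bochner_Integration.integral_cong[OF refl])
      fix x assume x: "x \<in> space \<mu>"
      have Fx: "(lca p f ^^ j) x \<in> space (cfg_space p)" using measurable_space[OF F_meas x] .
      show "complex_of_real (indicator (cyl p W c) ((lca p f ^^ j) x)) =
          (\<Sum>t\<in>?T. cnj (?chi t c) * character p ((adj p f ^^ j) (ext W t)) x) / of_nat (p ^ card W)"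
        unfolding cyl_fourier[OF p0 W Fx c] char_iter[OF p0 fS extfin] ..
    qed
    also have "\<dots> = integral\<^sup>L \<mu> (\<lambda>x. \<Sum>t\<in>?T. cnj (?chi t c) * character p ((adj p f ^^ j) (ext W t)) x) / of_nat (p ^ card W)"
      by (rule integral_divide_zero)
    also have "integral\<^sup>L \<mu> (\<lambda>x. \<Sum>t\<in>?T. cnj (?chi t c) * character p ((adj p f ^^ j) (ext W t)) x)
        = (\<Sum>t\<in>?T. integral\<^sup>L \<mu> (\<lambda>x. cnj (?chi t c) * character p ((adj p f ^^ j) (ext W t)) x))"
      by (rule Bochner_Integration.integral_sum)
        (intro integrable_mult_right integrable_char adj_iter_finite[OF fS extfin])
    also have "\<dots> = (\<Sum>t\<in>?T. cnj (?chi t c) * ?I j t)"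
      by (intro sum.cong refl integral_mult_right_zero)
    finally show ?thesis .
  qed
  have lim_t: "((\<lambda>j. cnj (?chi t c) * ?I j t) \<longlongrightarrow> (if t = ?t0 then 1 else 0)) FJ" if t: "t \<in> ?T" for t
  proof (cases "t = ?t0")
    case True
    have e0: "ext W ?t0 = (\<lambda>_. 0)" by (auto simp: ext_def)
    have cz: "character p (\<lambda>_. 0) = (\<lambda>_. 1)" by (rule ext) simp
    have "?I j t = 1" for j
      using True prob_space.prob_space[OF ps] by (simp add: e0 adj_zero cz)
    moreover have "cnj (?chi t c) = 1" using True by (simp add: e0)
    ultimately show ?thesis using True by simp
  next
    case False
    have "\<exists>n\<in>W. t n \<noteq> 0"
    proof (rule ccontr)
      assume "\<not> (\<exists>n\<in>W. t n \<noteq> 0)"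
      then have "t = ?t0" using t by (auto simp: PiE_iff extensional_def fun_eq_iff)
      then show False using False by simp
    qed
    then have kne: "{n. ext W t n \<noteq> 0} \<noteq> {}" by (auto simp: ext_def)
    have kc: "char_index p (ext W t)" unfolding char_index_def using extfin t p0 by (auto simp: ext_def PiE_iff)
    have "((\<lambda>j. cnj (?chi t c) * ?I j t) \<longlongrightarrow> cnj (?chi t c) * 0) FJ"
      by (intro tendsto_mult tendsto_const mixing_tendsto[OF kc kne])
    then show ?thesis using False by simp
  qed
  have t0T: "?t0 \<in> ?T" using p0 by auto
  have "((\<lambda>j. (\<Sum>t\<in>?T. cnj (?chi t c) * ?I j t) / of_nat (p ^ card W)) \<longlongrightarrow>
        (\<Sum>t\<in>?T. (if t = ?t0 then 1 else 0)) / of_nat (p ^ card W)) FJ"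
    by (intro tendsto_divide tendsto_sum tendsto_const lim_t) (use p0 in auto)
  moreover have "(\<Sum>t\<in>?T. (if t = ?t0 then 1 else 0 :: complex)) / of_nat (p ^ card W) = complex_of_real ((1 / real p) ^ card W)"
  proof -
    have pp: "p \<noteq> 0" using prime by auto
    show ?thesis using finT t0T pp by (simp add: power_divide)
  qed
  ultimately have "((\<lambda>j. complex_of_real (measure (\<nu> j) (cyl p W c))) \<longlongrightarrow> complex_of_real ((1 / real p) ^ card W)) FJ"
    unfolding eq by simp
  then show ?thesis by (simp only: tendsto_of_real_iff)
qed

end


lemma cfg_compact: "compact (space (cfg_space p) :: ((int ^ 'd) \<Rightarrow> nat) set)"
proof -
  have "compactin (product_topology (\<lambda>_. euclidean) (UNIV :: (int ^ 'd) set)) (PiE UNIV (\<lambda>_. {0..<p}))"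
    by (simp add: compactin_PiE finite_imp_compact)
  then show ?thesis unfolding cfg_space_def space_PiM euclidean_product_topology by simp
qed

lemma open_cyl_amb:
  assumes "finite W"
  shows "open {b :: (int ^ 'd) \<Rightarrow> nat. \<forall>n\<in>W. b n = a n}"
proof -
  have "open {b :: (int ^ 'd) \<Rightarrow> nat. \<forall>n\<in>W. b (id n) \<in> {a n}}"
    by (rule product_topology_basis'[OF assms]) (simp add: discrete_topology_class.open_discrete)
  then show ?thesis by simp
qed

lemma cont_approx:
  fixes g :: "((int ^ 'd) \<Rightarrow> nat) \<Rightarrow> real"
  assumes cont: "continuous_on (space (cfg_space p)) g" and \<epsilon>: "\<epsilon> > 0"
  shows "\<exists>W. finite W \<and> (\<forall>a\<in>space (cfg_space p). \<forall>b\<in>space (cfg_space p). (\<forall>n\<in>W. a n = b n) \<longrightarrow> \<bar>g a - g b\<bar> < \<epsilon>)"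
proof -
  let ?X = "space (cfg_space p) :: ((int ^ 'd) \<Rightarrow> nat) set"
  have loc: "\<exists>V. finite V \<and> (\<forall>b\<in>?X. (\<forall>n\<in>V. b n = a n) \<longrightarrow> \<bar>g b - g a\<bar> < \<epsilon> / 2)" if a: "a \<in> ?X" for a
  proof -
    have ob: "open (ball (g a) (\<epsilon> / 2))" "g a \<in> ball (g a) (\<epsilon> / 2)" using \<epsilon> by auto
    have "\<forall>x\<in>?X. \<forall>B. open B \<longrightarrow> g x \<in> B \<longrightarrow> (\<exists>A. open A \<and> x \<in> A \<and> (\<forall>y\<in>?X. y \<in> A \<longrightarrow> g y \<in> B))"
      using cont by (simp only: continuous_on_topological)
    then have "\<exists>A. open A \<and> a \<in> A \<and> (\<forall>y\<in>?X. y \<in> A \<longrightarrow> g y \<in> ball (g a) (\<epsilon> / 2))"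
      using a ob by blast
    then obtain A where A: "open A" "a \<in> A" "\<And>y. y \<in> ?X \<Longrightarrow> y \<in> A \<Longrightarrow> g y \<in> ball (g a) (\<epsilon> / 2)"
      by blast
    have "openin (product_topology (\<lambda>_. euclidean) UNIV) A" using A(1) unfolding open_fun_def .
    from product_topology_open_contains_basis[OF this A(2)]
    obtain V where V: "a \<in> PiE UNIV V" "finite {i. V i \<noteq> topspace euclidean}" "PiE UNIV V \<subseteq> A"
      by blast
    let ?W = "{i. V i \<noteq> UNIV}"
    have "finite ?W" using V(2) by simp
    moreover have "\<bar>g b - g a\<bar> < \<epsilon> / 2" if b: "b \<in> ?X" "\<forall>n\<in>?W. b n = a n" for b
    proof -
      have "b \<in> PiE UNIV V"
      proof (unfold PiE_UNIV_domain, rule Pi_I)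
        fix n :: "int ^ 'd"
        show "b n \<in> V n"
        proof (cases "n \<in> ?W")
          case True then show ?thesis using b(2) V(1) by (auto simp: PiE_iff)
        next
          case False then show ?thesis by simp
        qed
      qed
      then have "g b \<in> ball (g a) (\<epsilon> / 2)" using A(3) b(1) V(3) by blast
      then show ?thesis by (simp add: dist_real_def abs_minus_commute)
    qed
    ultimately show ?thesis by blast
  qed
  then have "\<forall>a\<in>?X. \<exists>V. finite V \<and> (\<forall>b\<in>?X. (\<forall>n\<in>V. b n = a n) \<longrightarrow> \<bar>g b - g a\<bar> < \<epsilon> / 2)"
    by blast
  from bchoice[OF this] obtain Vf where Vf0: "\<forall>a\<in>?X. finite (Vf a) \<and> (\<forall>b\<in>?X. (\<forall>n\<in>Vf a. b n = a n) \<longrightarrow> \<bar>g b - g a\<bar> < \<epsilon> / 2)"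
    by blast
  have Vf: "\<And>a. a \<in> ?X \<Longrightarrow> finite (Vf a)"
      "\<And>a b. a \<in> ?X \<Longrightarrow> b \<in> ?X \<Longrightarrow> (\<forall>n\<in>Vf a. b n = a n) \<Longrightarrow> \<bar>g b - g a\<bar> < \<epsilon> / 2"
    using Vf0 by blast+
  let ?O = "\<lambda>a. {b :: (int ^ 'd) \<Rightarrow> nat. \<forall>n\<in>Vf a. b n = a n}"
  have opn: "open (?O a)" if "a \<in> ?X" for a using open_cyl_amb[OF Vf(1)[OF that]] .
  have cov: "?X \<subseteq> (\<Union>a\<in>?X. ?O a)" by blast
  obtain C where C: "C \<subseteq> ?X" "finite C" "?X \<subseteq> (\<Union>a\<in>C. ?O a)"
    by (rule compactE_image[OF cfg_compact opn cov])
  define W where "W = (\<Union>a\<in>C. Vf a)"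
  have finW: "finite W" unfolding W_def using C Vf(1) by auto
  have "\<bar>g a - g b\<bar> < \<epsilon>" if ab: "a \<in> ?X" "b \<in> ?X" "\<forall>n\<in>W. a n = b n" for a b
  proof -
    obtain c where c: "c \<in> C" "a \<in> ?O c" using C(3) ab(1) by blast
    have cX: "c \<in> ?X" using c C(1) by blast
    have "\<forall>n\<in>Vf c. b n = c n" using c ab(3) unfolding W_def by auto
    then have "\<bar>g b - g c\<bar> < \<epsilon> / 2" by (rule Vf(2)[OF cX ab(2)])
    moreover have "\<bar>g a - g c\<bar> < \<epsilon> / 2" using c by (intro Vf(2)[OF cX ab(1)]) auto
    ultimately show ?thesis by linarith
  qed
  then show ?thesis using finW by blast
qed


definition gW :: "(int ^ 'd) set \<Rightarrow> (((int ^ 'd) \<Rightarrow> nat) \<Rightarrow> real) \<Rightarrow> ((int ^ 'd) \<Rightarrow> nat) \<Rightarrow> real" where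
  "gW W g a = g (ext W a)"

lemma ext_space: "p > 0 \<Longrightarrow> a \<in> space (cfg_space p) \<Longrightarrow> ext W a \<in> space (cfg_space p)"
  unfolding space_cfg ext_def by auto

lemma gW_measurable:
  fixes W :: "(int ^ 'd) set"
  assumes "finite W"
  shows "gW W g \<in> borel_measurable (cfg_space p)"
proof (rule measurable_fin_dep[OF assms])
  fix a b :: "(int ^ 'd) \<Rightarrow> nat" assume "\<forall>n\<in>W. a n = b n"
  then have "ext W a = ext W b" unfolding ext_def by auto
  then show "gW W g a = gW W g b" unfolding gW_def by simp
qed simp

lemma gW_sum:
  fixes W :: "(int ^ 'd) set"
  assumes W: "finite W" and a: "a \<in> space (cfg_space p)"
  shows "gW W g a = (\<Sum>t\<in>PiE W (\<lambda>_. {..<p}). g (ext W t) * indicator (cyl p W t) a)"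
proof -
  let ?t0 = "restrict a W"
  have t0: "?t0 \<in> PiE W (\<lambda>_. {..<p})" using a unfolding space_cfg by auto
  have ind: "indicator (cyl p W t) a = (if t = ?t0 then 1 else (0::real))" if t: "t \<in> PiE W (\<lambda>_. {..<p})" for t
  proof -
    have "a \<in> cyl p W t \<longleftrightarrow> t = ?t0"
    proof
      assume "a \<in> cyl p W t"
      then have "\<forall>n\<in>W. a n = t n" unfolding cyl_def by auto
      then show "t = ?t0" using t by (auto simp: PiE_iff extensional_def fun_eq_iff)
    next
      assume "t = ?t0" then show "a \<in> cyl p W t" using a unfolding cyl_def by auto
    qed
    then show ?thesis by (simp add: indicator_def)
  qed
  have "(\<Sum>t\<in>PiE W (\<lambda>_. {..<p}). g (ext W t) * indicator (cyl p W t) a)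
      = (\<Sum>t\<in>PiE W (\<lambda>_. {..<p}). if t = ?t0 then g (ext W t) else 0)"
    by (intro sum.cong refl) (simp add: ind)
  also have "\<dots> = g (ext W ?t0)" using t0 W by (simp add: finite_PiE)
  also have "ext W ?t0 = ext W a" unfolding ext_def by auto
  finally show ?thesis unfolding gW_def by simp
qed

lemma gW_close:
  assumes p: "p > 0" and a: "a \<in> space (cfg_space p)"
    and W: "\<forall>a\<in>space (cfg_space p). \<forall>b\<in>space (cfg_space p). (\<forall>n\<in>W. a n = b n) \<longrightarrow> \<bar>g a - g b\<bar> < \<epsilon>"
  shows "\<bar>g a - gW W g a\<bar> < \<epsilon>"
  unfolding gW_def using W a ext_space[OF p a, of W] by (auto simp: ext_def)

lemma g_measurable:
  fixes g :: "((int ^ 'd) \<Rightarrow> nat) \<Rightarrow> real"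
  assumes p: "p > 0" and cont: "continuous_on (space (cfg_space p)) g"
  shows "g \<in> borel_measurable (cfg_space p)"
proof -
  have "\<forall>i. \<exists>W. finite W \<and> (\<forall>a\<in>space (cfg_space p). \<forall>b\<in>space (cfg_space p). (\<forall>n\<in>W. a n = b n) \<longrightarrow> \<bar>g a - g b\<bar> < 1 / real (Suc i))"
    using cont_approx[OF cont] by simp
  then obtain Wn where Wn: "\<And>i. finite (Wn i)"
    "\<And>i. \<forall>a\<in>space (cfg_space p). \<forall>b\<in>space (cfg_space p). (\<forall>n\<in>Wn i. a n = b n) \<longrightarrow> \<bar>g a - g b\<bar> < 1 / real (Suc i)"
    by metis
  show ?thesis
  proof (rule borel_measurable_LIMSEQ_real[where u="\<lambda>i. gW (Wn i) g"])
    fix a :: "(int ^ 'd) \<Rightarrow> nat" assume a: "a \<in> space (cfg_space p)"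
    have "(\<lambda>i. gW (Wn i) g a - g a) \<longlonglongrightarrow> 0"
    proof (rule LIMSEQ_norm_0)
      fix i show "norm (gW (Wn i) g a - g a) < 1 / real (Suc i)"
        using gW_close[OF p a Wn(2)[of i]] by (simp add: abs_minus_commute)
    qed
    then have "(\<lambda>i. (gW (Wn i) g a - g a) + g a) \<longlonglongrightarrow> 0 + g a" by (intro tendsto_add tendsto_const)
    then show "(\<lambda>i. gW (Wn i) g a) \<longlonglongrightarrow> g a" by simp
  next
    fix i show "gW (Wn i) g \<in> borel_measurable (cfg_space p)" by (rule gW_measurable[OF Wn(1)])
  qed
qed

lemma g_bounded:
  fixes g :: "((int ^ 'd) \<Rightarrow> nat) \<Rightarrow> real"
  assumes cont: "continuous_on (space (cfg_space p)) g"
  shows "\<exists>B. \<forall>a\<in>space (cfg_space p). \<bar>g a\<bar> \<le> B"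
proof -
  have "compact (g ` space (cfg_space p))" by (rule compact_continuous_image[OF cont cfg_compact])
  then have "bounded (g ` space (cfg_space p))" by (rule compact_imp_bounded)
  then show ?thesis unfolding bounded_iff by auto
qed

lemma integrable_g:
  fixes g :: "((int ^ 'd) \<Rightarrow> nat) \<Rightarrow> real"
  assumes ps: "prob_space \<nu>" and sets: "sets \<nu> = sets (cfg_space p)"
    and meas: "g \<in> borel_measurable (cfg_space p)" and bnd: "\<forall>a\<in>space (cfg_space p). \<bar>g a\<bar> \<le> B"
  shows "integrable \<nu> g"
proof -
  interpret prob_space \<nu> by (rule ps)
  have sp: "space \<nu> = space (cfg_space p)" by (rule sets_eq_imp_space_eq[OF sets])
  show ?thesis
  proof (rule integrable_const_bound[where B=B])
    show "AE x in \<nu>. norm (g x) \<le> B" using bnd sp by (intro AE_I2) auto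
    show "g \<in> borel_measurable \<nu>" using meas measurable_cong_sets[OF sets refl] by blast
  qed
qed

lemma integral_close:
  fixes g h :: "((int ^ 'd) \<Rightarrow> nat) \<Rightarrow> real"
  assumes ps: "prob_space \<nu>" and sets: "sets \<nu> = sets (cfg_space p)"
    and ig: "integrable \<nu> g" and ih: "integrable \<nu> h"
    and close: "\<forall>a\<in>space (cfg_space p). \<bar>g a - h a\<bar> \<le> \<epsilon>"
  shows "\<bar>integral\<^sup>L \<nu> g - integral\<^sup>L \<nu> h\<bar> \<le> \<epsilon>"
proof -
  interpret prob_space \<nu> by (rule ps)
  have sp: "space \<nu> = space (cfg_space p)" by (rule sets_eq_imp_space_eq[OF sets])
  have "integral\<^sup>L \<nu> g - integral\<^sup>L \<nu> h = integral\<^sup>L \<nu> (\<lambda>x. g x - h x)"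
    using ig ih by simp
  also have "\<bar>\<dots>\<bar> \<le> integral\<^sup>L \<nu> (\<lambda>x. \<bar>g x - h x\<bar>)"
    using integral_norm_bound[of \<nu> "\<lambda>x. g x - h x"] by simp
  also have "\<dots> \<le> \<epsilon>"
    using ig ih close sp by (intro integral_le_const) (auto intro!: AE_I2)
  finally show ?thesis .
qed

lemma integral_gW:
  fixes W :: "(int ^ 'd) set"
  assumes ps: "prob_space \<nu>" and sets: "sets \<nu> = sets (cfg_space p)" and W: "finite W"
  shows "integral\<^sup>L \<nu> (gW W g) = (\<Sum>t\<in>PiE W (\<lambda>_. {..<p}). g (ext W t) * measure \<nu> (cyl p W t))"
proof -
  interpret prob_space \<nu> by (rule ps)
  have sp: "space \<nu> = space (cfg_space p)" by (rule sets_eq_imp_space_eq[OF sets])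
  have cs: "cyl p W t \<in> sets \<nu>" for t using cyl_sets[OF W] sets by simp
  have "integral\<^sup>L \<nu> (gW W g) = integral\<^sup>L \<nu> (\<lambda>a. \<Sum>t\<in>PiE W (\<lambda>_. {..<p}). g (ext W t) * indicator (cyl p W t) a)"
    by (rule Bochner_Integration.integral_cong[OF refl]) (simp add: sp gW_sum[OF W])
  also have "\<dots> = (\<Sum>t\<in>PiE W (\<lambda>_. {..<p}). integral\<^sup>L \<nu> (\<lambda>a. g (ext W t) * indicator (cyl p W t) a))"
    by (rule Bochner_Integration.integral_sum) (intro integrable_mult_right integrable_real_indicator cs; simp add: emeasure_eq_measure)
  also have "\<dots> = (\<Sum>t\<in>PiE W (\<lambda>_. {..<p}). g (ext W t) * measure \<nu> (cyl p W t))"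
  proof (intro sum.cong refl)
    fix t
    have "cyl p W t \<inter> space \<nu> = cyl p W t" using sets.sets_into_space[OF cs[of t]] by blast
    then show "integral\<^sup>L \<nu> (\<lambda>a. g (ext W t) * indicator (cyl p W t) a) = g (ext W t) * measure \<nu> (cyl p W t)"
      by simp
  qed
  finally show ?thesis .
qed


lemma cesaro_from_density:
  fixes a :: "nat \<Rightarrow> real"
  assumes dens: "cesaro_density_one J" and bnd: "\<And>n. \<bar>a n\<bar> \<le> B"
    and lim: "(a \<longlongrightarrow> L) (sequentially \<sqinter> principal J)"
  shows "(\<lambda>N. (\<Sum>n=1..N. a n) / real N) \<longlonglongrightarrow> L"
proof (rule LIMSEQ_I)
  fix \<epsilon> :: real assume \<epsilon>: "\<epsilon> > 0"
  define C where "C = B + \<bar>L\<bar>"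
  have C0: "C \<ge> 0" using bnd[of 0] unfolding C_def by linarith
  have aC: "\<bar>a n - L\<bar> \<le> C" for n using bnd[of n] unfolding C_def by linarith
  have "eventually (\<lambda>n. dist (a n) L < \<epsilon> / 2) (sequentially \<sqinter> principal J)"
    using lim \<epsilon> by (intro tendstoD) auto
  then obtain N1 where N1: "\<And>n. n \<ge> N1 \<Longrightarrow> n \<in> J \<Longrightarrow> \<bar>a n - L\<bar> < \<epsilon> / 2"
    unfolding eventually_inf_principal eventually_sequentially dist_real_def by blast
  have dz: "(\<lambda>N. real (card (- J \<inter> {1..N})) / real N) \<longlonglongrightarrow> 0"
  proof -
    have "(\<lambda>N. 1 - real (card (J \<inter> {1..N})) / real N) \<longlonglongrightarrow> 1 - 1"
      using dens unfolding cesaro_density_one_def by (intro tendsto_diff tendsto_const)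
    moreover have "\<forall>\<^sub>F N in sequentially. 1 - real (card (J \<inter> {1..N})) / real N = real (card (- J \<inter> {1..N})) / real N"
    proof (rule eventually_sequentiallyI[of 1])
      fix N :: nat assume N: "N \<ge> 1"
      have "card (J \<inter> {1..N}) + card (- J \<inter> {1..N}) = card {1..N}"
      proof -
        have "J \<inter> {1..N} \<union> - J \<inter> {1..N} = {1..N}" by auto
        then show ?thesis by (subst card_Un_disjoint[symmetric]) auto
      qed
      then have "card (J \<inter> {1..N}) + card (- J \<inter> {1..N}) = N" by simp
      then have "real (card (J \<inter> {1..N})) + real (card (- J \<inter> {1..N})) = real N" by (metis of_nat_add)
      then show "1 - real (card (J \<inter> {1..N})) / real N = real (card (- J \<inter> {1..N})) / real N"
        using N by (simp add: field_simps)
    qed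
    ultimately show ?thesis by (simp add: tendsto_cong)
  qed
  have "\<epsilon> / (4 * (C + 1)) > 0" using \<epsilon> C0 by simp
  from LIMSEQ_D[OF dz this] obtain N2 where N2: "\<And>N. N \<ge> N2 \<Longrightarrow> real (card (- J \<inter> {1..N})) / real N < \<epsilon> / (4 * (C + 1))"
    by auto
  define N3 where "N3 = nat \<lceil>4 * (C + 1) * real N1 / \<epsilon>\<rceil> + 1"
  show "\<exists>no. \<forall>N\<ge>no. norm ((\<Sum>n=1..N. a n) / real N - L) < \<epsilon>"
  proof (intro exI allI impI)
    fix N assume N: "N \<ge> max N2 N3"
    have Npos: "real N > 0" using N unfolding N3_def by simp
    have N3le: "4 * (C + 1) * real N1 / \<epsilon> < real N"
    proof -
      have "4 * (C + 1) * real N1 / \<epsilon> \<le> real (nat \<lceil>4 * (C + 1) * real N1 / \<epsilon>\<rceil>)" by linarith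
      also have "\<dots> < real N3" unfolding N3_def by simp
      also have "\<dots> \<le> real N" using N by simp
      finally show ?thesis .
    qed
    have pt: "\<bar>a n - L\<bar> \<le> (if n < N1 then C else 0) + (if n \<notin> J then C else 0) + \<epsilon> / 2" for n
    proof (cases "n < N1 \<or> n \<notin> J")
      case True then show ?thesis using aC[of n] C0 \<epsilon> by auto
    next
      case False then show ?thesis using N1[of n] by auto
    qed
    have "(\<Sum>n=1..N. a n) / real N - L = (\<Sum>n=1..N. (a n - L)) / real N"
      using Npos by (simp add: sum_subtractf field_simps)
    then have "\<bar>(\<Sum>n=1..N. a n) / real N - L\<bar> \<le> (\<Sum>n=1..N. \<bar>a n - L\<bar>) / real N"
      using Npos by (simp add: divide_right_mono sum_abs)
    also have "\<dots> \<le> (\<Sum>n=1..N. (if n < N1 then C else 0) + (if n \<notin> J then C else 0) + \<epsilon> / 2) / real N"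
      using Npos by (intro divide_right_mono sum_mono pt) auto
    also have "(\<Sum>n=1..N. (if n < N1 then C else 0) + (if n \<notin> J then C else 0) + \<epsilon> / 2)
        = C * real (card {n\<in>{1..N}. n < N1}) + C * real (card (- J \<inter> {1..N})) + real N * (\<epsilon> / 2)"
    proof -
      have s1: "(\<Sum>n=1..N. (if n < N1 then C else 0)) = C * real (card {n\<in>{1..N}. n < N1})"
        by (simp add: sum.inter_filter[symmetric])
      have e2: "{n\<in>{1..N}. n \<notin> J} = - J \<inter> {1..N}" by auto
      have "(\<Sum>n=1..N. (if n \<notin> J then C else 0)) = (\<Sum>n\<in>{n\<in>{1..N}. n \<notin> J}. C)"
        by (rule sum.inter_filter[symmetric]) simp
      also have "\<dots> = C * real (card (- J \<inter> {1..N}))" unfolding e2 by simp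
      finally have s2: "(\<Sum>n=1..N. (if n \<notin> J then C else 0)) = C * real (card (- J \<inter> {1..N}))" .
      show ?thesis unfolding sum.distrib s1 s2 by simp
    qed
    also have "\<dots> / real N = C * real (card {n\<in>{1..N}. n < N1}) / real N + C * (real (card (- J \<inter> {1..N})) / real N) + \<epsilon> / 2"
      using Npos by (simp add: field_simps)
    also have "\<dots> < \<epsilon> / 4 + \<epsilon> / 4 + \<epsilon> / 2"
    proof -
      have "card {n\<in>{1..N}. n < N1} \<le> card {..<N1}" by (intro card_mono) auto
      then have c1: "real (card {n\<in>{1..N}. n < N1}) \<le> real N1" by simp
      have "C * real (card {n\<in>{1..N}. n < N1}) / real N \<le> (C + 1) * real N1 / real N"
        using c1 C0 Npos by (intro divide_right_mono mult_mono) auto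
      also have "\<dots> < \<epsilon> / 4"
        using N3le Npos \<epsilon> C0 by (simp add: field_simps)
      finally have t1: "C * real (card {n\<in>{1..N}. n < N1}) / real N < \<epsilon> / 4" .
      have "real (card (- J \<inter> {1..N})) / real N < \<epsilon> / (4 * (C + 1))" using N2 N by simp
      then have "C * (real (card (- J \<inter> {1..N})) / real N) \<le> C * (\<epsilon> / (4 * (C + 1)))"
        using C0 by (intro mult_left_mono) auto
      also have "\<dots> < \<epsilon> / 4" using C0 \<epsilon> by (simp add: field_simps)
      finally have t2: "C * (real (card (- J \<inter> {1..N})) / real N) < \<epsilon> / 4" .
      show ?thesis using t1 t2 by linarith
    qed
    also have "\<dots> = \<epsilon>" by simp
    finally show "norm ((\<Sum>n=1..N. a n) / real N - L) < \<epsilon>" by simp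
  qed
qed

context setting
begin

lemma weak_star_g:
  fixes g :: "((int ^ 'd) \<Rightarrow> nat) \<Rightarrow> real"
  assumes cont: "continuous_on (space (cfg_space p)) g"
  shows "((\<lambda>j. integral\<^sup>L (\<nu> j) g) \<longlongrightarrow> integral\<^sup>L (haar p) g) FJ"
proof (rule tendstoI)
  fix \<epsilon> :: real assume \<epsilon>: "\<epsilon> > 0"
  have meas: "g \<in> borel_measurable (cfg_space p)" by (rule g_measurable[OF p0 cont])
  obtain B where B: "\<forall>a\<in>space (cfg_space p). \<bar>g a\<bar> \<le> B" using g_bounded[OF cont] by blast
  have psh: "prob_space (haar p)" by (rule prob_space_haar[OF p0])
  obtain W where W: "finite W"
    "\<forall>a\<in>space (cfg_space p). \<forall>b\<in>space (cfg_space p). (\<forall>n\<in>W. a n = b n) \<longrightarrow> \<bar>g a - g b\<bar> < \<epsilon> / 4"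
    using cont_approx[OF cont, of "\<epsilon> / 4"] \<epsilon> by auto
  let ?h = "gW W g"
  have hmeas: "?h \<in> borel_measurable (cfg_space p)" by (rule gW_measurable[OF W(1)])
  have hB: "\<forall>a\<in>space (cfg_space p). \<bar>?h a\<bar> \<le> B"
    using B ext_space[OF p0] unfolding gW_def by blast
  have close: "\<forall>a\<in>space (cfg_space p). \<bar>g a - ?h a\<bar> \<le> \<epsilon> / 4"
    using gW_close[OF p0 _ W(2)] by (auto intro: less_imp_le)
  have cl_nu: "\<bar>integral\<^sup>L (\<nu> j) g - integral\<^sup>L (\<nu> j) ?h\<bar> \<le> \<epsilon> / 4" for j
    by (rule integral_close[OF prob_nu sets_nu integrable_g[OF prob_nu sets_nu meas B]
          integrable_g[OF prob_nu sets_nu hmeas hB] close])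
  have cl_h: "\<bar>integral\<^sup>L (haar p) g - integral\<^sup>L (haar p) ?h\<bar> \<le> \<epsilon> / 4"
    by (rule integral_close[OF psh sets_haar integrable_g[OF psh sets_haar meas B]
          integrable_g[OF psh sets_haar hmeas hB] close])
  have lim_h: "((\<lambda>j. integral\<^sup>L (\<nu> j) ?h) \<longlongrightarrow> integral\<^sup>L (haar p) ?h) FJ"
  proof -
    have "((\<lambda>j. \<Sum>t\<in>PiE W (\<lambda>_. {..<p}). g (ext W t) * measure (\<nu> j) (cyl p W t)) \<longlongrightarrow>
        (\<Sum>t\<in>PiE W (\<lambda>_. {..<p}). g (ext W t) * (1 / real p) ^ card W)) FJ"
      by (intro tendsto_sum tendsto_mult tendsto_const cyl_nu_tendsto[OF W(1)]) auto
    moreover have "(\<Sum>t\<in>PiE W (\<lambda>_. {..<p}). g (ext W t) * (1 / real p) ^ card W) = integral\<^sup>L (haar p) ?h"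
      unfolding integral_gW[OF psh sets_haar W(1)]
      by (intro sum.cong refl) (auto simp: measure_haar_cyl[OF p0 W(1)] PiE_iff)
    ultimately show ?thesis unfolding integral_gW[OF prob_nu sets_nu W(1)] by simp
  qed
  have "eventually (\<lambda>j. dist (integral\<^sup>L (\<nu> j) ?h) (integral\<^sup>L (haar p) ?h) < \<epsilon> / 4) FJ"
    using lim_h \<epsilon> by (intro tendstoD) auto
  then show "eventually (\<lambda>j. dist (integral\<^sup>L (\<nu> j) g) (integral\<^sup>L (haar p) g) < \<epsilon>) FJ"
  proof (rule eventually_mono)
    fix j assume "dist (integral\<^sup>L (\<nu> j) ?h) (integral\<^sup>L (haar p) ?h) < \<epsilon> / 4"
    then show "dist (integral\<^sup>L (\<nu> j) g) (integral\<^sup>L (haar p) g) < \<epsilon>"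
      using cl_nu[of j] cl_h unfolding dist_real_def by linarith
  qed
qed

lemma integral_bound:
  fixes g :: "((int ^ 'd) \<Rightarrow> nat) \<Rightarrow> real"
  assumes cont: "continuous_on (space (cfg_space p)) g" and B: "\<forall>a\<in>space (cfg_space p). \<bar>g a\<bar> \<le> B"
  shows "\<bar>integral\<^sup>L (\<nu> j) g\<bar> \<le> B"
proof -
  interpret P: prob_space "\<nu> j" by (rule prob_nu)
  have meas: "g \<in> borel_measurable (cfg_space p)" by (rule g_measurable[OF p0 cont])
  have ig: "integrable (\<nu> j) g" by (rule integrable_g[OF prob_nu sets_nu meas B])
  have "\<bar>integral\<^sup>L (\<nu> j) g\<bar> \<le> integral\<^sup>L (\<nu> j) (\<lambda>x. \<bar>g x\<bar>)"
    using integral_norm_bound[of "\<nu> j" g] by simp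
  also have "\<dots> \<le> B" using ig B by (intro P.integral_le_const) (auto intro!: AE_I2)
  finally show ?thesis .
qed

end


theorem mainTheorem12:
  fixes p :: nat and f :: "(int ^ 'd) \<Rightarrow> nat" and \<mu> :: "((int ^ 'd) \<Rightarrow> nat) measure"
  assumes "prime p"
    and "lca_coeffs p f" and "nontrivial_lca f"
    and "prob_space \<mu>" and "sets \<mu> = sets (cfg_space p)"
    and "harmonically_mixing p \<mu>"
  shows "\<exists>J. J \<subseteq> {1..} \<and> cesaro_density_one J \<and>
           weak_star_along p (\<lambda>j. distr \<mu> (cfg_space p) (lca p f ^^ j)) J (haar p)
         \<and> (\<forall>g :: ((int ^ 'd) \<Rightarrow> nat) \<Rightarrow> real. continuous_on (space (cfg_space p)) g \<longrightarrow>
              ((\<lambda>N. (\<Sum>n=1..N. integral\<^sup>L (distr \<mu> (cfg_space p) (lca p f ^^ n)) g) / real N)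
                 \<longlonglongrightarrow> integral\<^sup>L (haar p) g))"
proof -
  obtain J where J: "J \<subseteq> {1..}" "cesaro_density_one J" "\<forall>e\<ge>1. \<forall>M. finite (J - {j. M \<le> gb (p ^ e) j})"
    using good_J[OF assms(1)] by blast
  interpret S: setting p f \<mu> J
    by (rule setting.intro[OF assms J(3)])
  have ws: "weak_star_along p (\<lambda>j. distr \<mu> (cfg_space p) (lca p f ^^ j)) J (haar p)"
    unfolding weak_star_along_def by (intro allI impI S.weak_star_g)
  have ces: "((\<lambda>N. (\<Sum>n=1..N. integral\<^sup>L (distr \<mu> (cfg_space p) (lca p f ^^ n)) g) / real N)
                 \<longlonglongrightarrow> integral\<^sup>L (haar p) g)"
    if cont: "continuous_on (space (cfg_space p)) g" for g :: "((int ^ 'd) \<Rightarrow> nat) \<Rightarrow> real"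
  proof -
    obtain B where B: "\<forall>a\<in>space (cfg_space p). \<bar>g a\<bar> \<le> B" using g_bounded[OF cont] by blast
    show ?thesis
      by (rule cesaro_from_density[OF J(2) S.integral_bound[OF cont B] S.weak_star_g[OF cont]])
  qed
  show ?thesis by (intro exI[of _ J] conjI J(1) J(2) ws allI impI ces)
qed


end
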